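(* Let $\ell\ge2$ be an integer and $n=3^\ell+1$. Let $\beta$ be a primitive $2n$-th root of unity in an extension field of $\mathrm{GF}(3)$ and let $\mathbb{M}_\beta(x)$ be its minimal polynomial over $\mathrm{GF}(3)$. Let $\mathcal{C}(\ell)$ be the ternary negacyclic code of length $n$ with check polynomial $\mathbb{M}_\beta(x)$. Then $\mathcal{C}(\ell)$ has parameters $[n,2\ell,d]$ with $d\ge\frac{3^\ell+3}{2}$, and $\mathcal{C}(\ell)^\perp$ has parameters $[n,n-2\ell,d^\perp]$, where $d^\perp=3$ if $\ell$ is odd and $d^\perp=4$ if $\ell$ is even.
   Context: A ternary negacyclic code of length $n$ is an ideal of $\mathrm{GF}(3)[x]/(x^n+1)$; a code with check polynomial $h(x)$ (a monic divisor of $x^n+1$) is the one with generator polynomial $(x^n+1)/h(x)$. $[n,k,d]$ denotes length, dimension, minimum Hamming distance; $\perp$ is the Euclidean dual. *)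

theory Defs
  imports "Berlekamp_Zassenhaus.Finite_Field" "HOL-Computational_Algebra.Polynomial"
begin

text \<open>A three-element index type, so that GF(3) = tri mod_ring.\<close>
typedef tri = "{0::nat..<3}" by (rule exI[of _ 0]) simp

instance tri :: finite
proof
  show "finite (UNIV :: tri set)"
    by (metis finite_atLeastLessThan type_definition.Abs_image type_definition_tri finite_imageI)
qed

lemma card_tri: "CARD(tri) = 3"
  by (metis card_atLeastLessThan diff_zero type_definition.card type_definition_tri)

instance tri :: prime_card
  by standard (simp add: card_tri)

type_synonym gf3 = "tri mod_ring"

text \<open>The canonical embedding of GF(3) into a field of characteristic 3.\<close>
definition gf3_emb :: "gf3 \<Rightarrow> 'b::field" where
  "gf3_emb c = of_int (to_int_mod_ring c)"

definition primitive_root_unity :: "nat \<Rightarrow> 'b::field \<Rightarrow> bool" where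
  "primitive_root_unity m \<beta> \<longleftrightarrow> \<beta> ^ m = 1 \<and> (\<forall>k. 0 < k \<and> k < m \<longrightarrow> \<beta> ^ k \<noteq> 1)"

definition is_min_poly_GF3 :: "'b::field \<Rightarrow> gf3 poly \<Rightarrow> bool" where
  "is_min_poly_GF3 \<beta> M \<longleftrightarrow> lead_coeff M = 1 \<and> poly (map_poly gf3_emb M) \<beta> = 0 \<and>
     (\<forall>p. p \<noteq> 0 \<and> poly (map_poly gf3_emb p) \<beta> = 0 \<longrightarrow> degree M \<le> degree p)"

text \<open>The negacyclic code of length n with check polynomial h: the ideal of
  GF(3)[x]/(x^n+1) generated by (x^n+1)/h, with residues represented by their
  reduced representatives (polynomials of degree < n).\<close>
definition negacyclic_code :: "nat \<Rightarrow> gf3 poly \<Rightarrow> gf3 poly set" where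
  "negacyclic_code n h = {(a * ((monom 1 n + 1) div h)) mod (monom 1 n + 1) | a. True}"

definition hweight :: "nat \<Rightarrow> gf3 poly \<Rightarrow> nat" where
  "hweight n c = card {i. i < n \<and> coeff c i \<noteq> 0}"

definition hdist :: "nat \<Rightarrow> gf3 poly \<Rightarrow> gf3 poly \<Rightarrow> nat" where
  "hdist n c c' = card {i. i < n \<and> coeff c i \<noteq> coeff c' i}"

definition min_dist :: "nat \<Rightarrow> gf3 poly set \<Rightarrow> nat" where
  "min_dist n C = Min {hdist n c c' | c c'. c \<in> C \<and> c' \<in> C \<and> c \<noteq> c'}"

definition code_dim :: "gf3 poly set \<Rightarrow> nat" where
  "code_dim C = vector_space.dim (smult :: gf3 \<Rightarrow> gf3 poly \<Rightarrow> gf3 poly) C"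

definition dual_code :: "nat \<Rightarrow> gf3 poly set \<Rightarrow> gf3 poly set" where
  "dual_code n C = {v. degree v < n \<and> (\<forall>c\<in>C. (\<Sum>i<n. coeff v i * coeff c i) = 0)}"

end

theory Submission
  imports Defs "HOL-Library.FuncSet"
begin


lemma CHAR_gf3: "CHAR(gf3) = 3"
  using card_tri by simp

lemma gf3_three: "(3::gf3) = 0"
proof -
  have "(of_nat CHAR(gf3) :: gf3) = 0" by (rule of_nat_CHAR)
  then show ?thesis unfolding CHAR_gf3 by simp
qed

lemma gf3_two: "(2::gf3) = -1"
  using gf3_three by (simp add: eq_neg_iff_add_eq_0)

lemma gf3_cases: "(c::gf3) = 0 \<or> c = 1 \<or> c = -1"
proof -
  obtain t where t: "t = to_int_mod_ring c" by simp
  have r: "t \<in> {0..<3}" unfolding t using range_to_int_mod_ring[where 'a=tri] card_tri by auto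
  then have t3: "t = 0 \<or> t = 1 \<or> t = 2" by auto
  have ct: "c = of_int_mod_ring t" unfolding t by simp
  have "(of_int_mod_ring 2 :: gf3) = -1"
    using gf3_two of_int_of_int_mod_ring[symmetric, where 'a=tri] by (metis of_int_numeral)
  moreover have "(of_int_mod_ring 1 :: gf3) = 1"
    using of_int_of_int_mod_ring[symmetric, where 'a=tri] by (metis of_int_1)
  moreover have "(of_int_mod_ring 0 :: gf3) = 0"
    using of_int_of_int_mod_ring[symmetric, where 'a=tri] by (metis of_int_0)
  ultimately show ?thesis using t3 ct by auto
qed

lemma gf3_one_neq_neg: "(1::gf3) \<noteq> -1"
proof
  assume "(1::gf3) = -1"
  then have "(2::gf3) = 0" by (simp add: eq_neg_iff_add_eq_0)
  then have "(of_nat 2::gf3) = 0" by simp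
  then show False using of_nat_eq_0_iff_char_dvd[of 2, where 'a=gf3] CHAR_gf3 by simp
qed


locale setting =
  fixes l n :: nat and \<gamma> :: "'b::field"
  assumes l2: "l \<ge> 2" and n_def: "n = 3^l + 1" and ch: "CHAR('b) = 3"
    and prim: "primitive_root_unity (2*n) \<gamma>"
begin

lemma three: "(3::'b) = 0"
proof -
  have "(of_nat CHAR('b) :: 'b) = 0" by (rule of_nat_CHAR)
  then show ?thesis unfolding ch by simp
qed

lemma two_ne: "(2::'b) \<noteq> 0"
proof
  assume "(2::'b) = 0"
  then have "(of_nat 2::'b) = 0" by simp
  then show False using of_nat_eq_0_iff_char_dvd[of 2, where 'a='b] ch by simp
qed

lemma one_ne_neg: "(1::'b) \<noteq> -1"
proof
  assume "(1::'b) = -1"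
  then have "(2::'b) = 0" by (simp add: eq_neg_iff_add_eq_0)
  then show False using two_ne by simp
qed

lemma emb_add: "gf3_emb (a + b) = (gf3_emb a + gf3_emb b :: 'b)"
proof -
  have "gf3_emb (a+b) = (of_int ((to_int_mod_ring a + to_int_mod_ring b) mod int CHAR('b)) :: 'b)"
    unfolding gf3_emb_def to_int_mod_ring_add card_tri ch by simp
  also have "\<dots> = of_int (to_int_mod_ring a + to_int_mod_ring b)" by (rule of_int_mod_CHAR)
  finally show ?thesis unfolding gf3_emb_def by simp
qed

lemma emb_mult: "gf3_emb (a * b) = (gf3_emb a * gf3_emb b :: 'b)"
proof -
  have "gf3_emb (a*b) = (of_int ((to_int_mod_ring a * to_int_mod_ring b) mod int CHAR('b)) :: 'b)"
    unfolding gf3_emb_def to_int_mod_ring_mult card_tri ch by simp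
  also have "\<dots> = of_int (to_int_mod_ring a * to_int_mod_ring b)" by (rule of_int_mod_CHAR)
  finally show ?thesis unfolding gf3_emb_def by simp
qed

lemma emb_one: "gf3_emb 1 = (1::'b)"
  unfolding gf3_emb_def by simp

lemma emb_zero: "gf3_emb 0 = (0::'b)"
  unfolding gf3_emb_def by (simp add: to_int_mod_ring_hom.hom_zero)

sublocale E: field_hom "gf3_emb :: gf3 \<Rightarrow> 'b"
  by unfold_locales (simp_all add: emb_add emb_mult emb_one emb_zero)

sublocale EP: map_poly_inj_idom_hom "gf3_emb :: gf3 \<Rightarrow> 'b" ..

lemma emb_cases: "(gf3_emb c :: 'b) = 0 \<or> (gf3_emb c :: 'b) = 1 \<or> (gf3_emb c :: 'b) = -1"
proof -
  have "c = 0 \<or> c = 1 \<or> c = -1" by (rule gf3_cases)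
  then show ?thesis
  proof (elim disjE)
    assume "c = 0" then show ?thesis using emb_zero by simp
  next
    assume "c = 1" then show ?thesis using emb_one by simp
  next
    assume "c = -1" then show ?thesis using emb_one E.hom_uminus[of 1] by simp
  qed
qed

lemma n_ge: "n \<ge> 10"
proof -
  have "(3::nat)^l \<ge> 3^2" using l2 by (intro power_increasing) auto
  then show ?thesis using n_def by simp
qed

lemma q_odd: "odd ((3::nat)^l)" by simp

lemma n_even: "even n" using n_def by simp

lemma pow3_lt_n: "m < l \<Longrightarrow> (3::nat)^m < n"
proof -
  assume "m < l"
  then have "(3::nat)^m < 3^l" by (intro power_strict_increasing) auto
  then show ?thesis using n_def by linarith
qed

lemma e_low: "j < l \<Longrightarrow> (3::nat)^j mod (2*n) = 3^j"
  using pow3_lt_n[of j] by simp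

lemma e_high: assumes "m < l" shows "(3::nat)^(l+m) mod (2*n) = n - 3^m"
proof -
  obtain k where k: "(3::nat)^m = 2*k+1" using oddE[of "(3::nat)^m"] by auto
  have a: "(3::nat)^(l+m) + 3^m = 3^m * n" using n_def by (simp add: power_add algebra_simps)
  have b: "(3::nat)^m * n = k*(2*n) + n" using k by (simp add: algebra_simps)
  have lt: "(3::nat)^m < n" using pow3_lt_n assms by simp
  have "(3::nat)^(l+m) = k*(2*n) + (n - 3^m)" using a b lt by linarith
  then have "(3::nat)^(l+m) mod (2*n) = (n - 3^m) mod (2*n)" by simp
  also have "\<dots> = n - 3^m" using n_ge by simp
  finally show ?thesis .
qed

lemma e_period: "(3::nat)^(2*l) mod (2*n) = 1"
proof -
  obtain k where k: "(3::nat)^l = 2*k+1" using oddE[of "(3::nat)^l"] by auto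
  have "(3::nat)^(2*l) = (3^l)^2" by (simp add: power_mult[symmetric] mult.commute)
  also have "\<dots> = 1 + k*(2*n)" using k n_def by (simp add: power2_eq_square algebra_simps)
  finally have "(3::nat)^(2*l) mod (2*n) = (1 + k*(2*n)) mod (2*n)" by simp
  also have "\<dots> = 1 mod (2*n)" by (rule mod_mult_self1)
  finally show ?thesis using n_ge by simp
qed

lemma e_le: assumes "j < 2*l" shows "(3::nat)^j mod (2*n) \<le> 3^l"
proof (cases "j < l")
  case True
  then show ?thesis using e_low[of j] by (simp add: power_increasing)
next
  case False
  then obtain m where m: "j = l + m" "m < l" using assms by (metis add_diff_inverse_nat add_less_imp_less_left mult_2)
  have "(3::nat)^(l+m) mod (2*n) = n - 3^m" using e_high m(2) by simp
  moreover have "(1::nat) \<le> 3^m" by simp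
  ultimately show ?thesis unfolding m(1) using n_def by linarith
qed

lemma e_inj: "inj_on (\<lambda>j. (3::nat)^j mod (2*n)) {..<2*l}"
proof (rule inj_onI)
  fix i j assume i: "i \<in> {..<2*l}" and j: "j \<in> {..<2*l}"
    and eq: "(3::nat)^i mod (2*n) = 3^j mod (2*n)"
  have lowb: "m < l \<Longrightarrow> (3::nat)^m \<le> 3^(l-1)" for m by (intro power_increasing) auto
  have nb: "n = 3*3^(l-1) + 1" using n_def l2 by (metis Suc_diff_1 less_le_trans pos2 power_Suc zero_less_numeral)
  show "i = j"
  proof (cases "i < l")
    case ti: True
    show ?thesis
    proof (cases "j < l")
      case True
      then show ?thesis using ti eq e_low by simp
    next
      case False
      then obtain m where m: "j = l + m" "m < l" using j by (metis add_diff_inverse_nat add_less_imp_less_left lessThan_iff mult_2)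
      have "(3::nat)^i = n - 3^m" using eq e_low[OF ti] e_high[OF m(2)] m(1) by simp
      moreover have "(3::nat)^i \<le> 3^(l-1)" "(3::nat)^m \<le> 3^(l-1)" using lowb ti m by auto
      ultimately show ?thesis using nb by linarith
    qed
  next
    case fi: False
    then obtain m where m: "i = l + m" "m < l" using i by (metis add_diff_inverse_nat add_less_imp_less_left lessThan_iff mult_2)
    show ?thesis
    proof (cases "j < l")
      case True
      have "(3::nat)^j = n - 3^m" using eq e_low[OF True] e_high[OF m(2)] m(1) by simp
      moreover have "(3::nat)^j \<le> 3^(l-1)" "(3::nat)^m \<le> 3^(l-1)" using lowb True m by auto
      ultimately show ?thesis using nb by linarith
    next
      case False
      then obtain m' where m': "j = l + m'" "m' < l" using j by (metis add_diff_inverse_nat add_less_imp_less_left lessThan_iff mult_2)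
      have "n - (3::nat)^m = n - 3^m'" using eq e_high[OF m(2)] e_high[OF m'(2)] m(1) m'(1) by simp
      moreover have "(3::nat)^m < n" "(3::nat)^m' < n" using pow3_lt_n m m' by auto
      ultimately have "(3::nat)^m = 3^m'" by linarith
      then have "m = m'" by simp
      then show ?thesis using m m' by simp
    qed
  qed
qed

lemma g_2n: "\<gamma>^(2*n) = 1" using prim unfolding primitive_root_unity_def by simp

lemma g_prim: "0 < k \<Longrightarrow> k < 2*n \<Longrightarrow> \<gamma>^k \<noteq> 1"
  using prim unfolding primitive_root_unity_def by simp

lemma g_nz: "\<gamma> \<noteq> 0"
proof
  assume "\<gamma> = 0"
  then have "\<gamma>^(2*n) = 0" using n_ge by simp
  then show False using g_2n by simp
qed

lemma g_pow_mod: "\<gamma>^a = \<gamma>^(a mod (2*n))"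
proof -
  have "\<gamma>^a = \<gamma>^(2*n*(a div (2*n)) + a mod (2*n))" by simp
  also have "\<dots> = (\<gamma>^(2*n))^(a div (2*n)) * \<gamma>^(a mod (2*n))" by (simp only: power_add power_mult)
  finally show ?thesis using g_2n by simp
qed

lemma g_pow_eq_iff: "\<gamma>^a = \<gamma>^b \<longleftrightarrow> a mod (2*n) = b mod (2*n)"
proof
  assume "a mod (2*n) = b mod (2*n)"
  then show "\<gamma>^a = \<gamma>^b" using g_pow_mod[of a] g_pow_mod[of b] by simp
next
  assume eq: "\<gamma>^a = \<gamma>^b"
  define a' where "a' = a mod (2*n)"
  define b' where "b' = b mod (2*n)"
  have a'l: "a' < 2*n" "b' < 2*n" unfolding a'_def b'_def using n_ge by auto
  have e: "\<gamma>^a' = \<gamma>^b'" using eq g_pow_mod[of a] g_pow_mod[of b] a'_def b'_def by simp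
  show "a mod (2*n) = b mod (2*n)"
  proof (rule ccontr)
    assume "a mod (2*n) \<noteq> b mod (2*n)"
    then have ne: "a' \<noteq> b'" unfolding a'_def b'_def .
    show False
    proof (cases "a' < b'")
      case True
      have "\<gamma>^b' = \<gamma>^a' * \<gamma>^(b'-a')" using True by (simp add: power_add[symmetric])
      then have "\<gamma>^(b'-a') = 1" using e g_nz by simp
      then show False using g_prim[of "b'-a'"] True a'l by simp
    next
      case False
      then have lt: "b' < a'" using ne by simp
      have "\<gamma>^a' = \<gamma>^b' * \<gamma>^(a'-b')" using lt by (simp add: power_add[symmetric])
      then have "\<gamma>^(a'-b') = 1" using e g_nz by simp
      then show False using g_prim[of "a'-b'"] lt a'l by simp
    qed
  qed
qed

lemma g_n: "\<gamma>^n = -1"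
proof -
  have "(\<gamma>^n)^2 = 1" using g_2n by (simp add: power_mult[symmetric] mult.commute)
  then have "\<gamma>^n = 1 \<or> \<gamma>^n = -1" by (simp add: power2_eq_1_iff)
  moreover have "\<gamma>^n \<noteq> 1" using g_prim[of n] n_ge by simp
  ultimately show ?thesis by simp
qed

lemma g_pm_eq: assumes "i < n" "j < n" "\<gamma>^i = \<gamma>^j \<or> \<gamma>^i = -(\<gamma>^j)" shows "i = j"
proof -
  have "\<gamma>^i = \<gamma>^j \<or> \<gamma>^i = \<gamma>^(n+j)" using assms(3) g_n by (simp add: power_add)
  then have "i mod (2*n) = j mod (2*n) \<or> i mod (2*n) = (n+j) mod (2*n)" using g_pow_eq_iff by simp
  then show ?thesis using assms(1,2) by auto
qed

lemma root_2n_is_pow: assumes "z^(2*n) = 1" shows "\<exists>k<2*n. z = \<gamma>^k"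
proof (rule ccontr)
  assume nex: "\<not> ?thesis"
  let ?p = "monom (1::'b) (2*n) + [:-1:]"
  have deg: "degree ?p = 2*n" using n_ge by (subst degree_add_eq_left) (simp_all add: degree_monom_eq)
  have p0: "?p \<noteq> 0" using deg n_ge by auto
  have sub: "insert z ((\<lambda>k. \<gamma>^k) ` {..<2*n}) \<subseteq> {x. poly ?p x = 0}"
  proof -
    have "poly ?p (\<gamma>^k) = 0" for k
    proof -
      have "(\<gamma>^k)^(2*n) = (\<gamma>^(2*n))^k" by (metis power_mult mult.commute)
      then show ?thesis using g_2n by (simp add: poly_monom)
    qed
    then show ?thesis using assms by (auto simp: poly_monom)
  qed
  have inj: "inj_on (\<lambda>k. \<gamma>^k) {..<2*n}"
    by (rule inj_onI) (simp add: g_pow_eq_iff)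
  have zn: "z \<notin> (\<lambda>k. \<gamma>^k) ` {..<2*n}" using nex by auto
  have ci: "card ((\<lambda>k. \<gamma>^k) ` {..<2*n}) = 2*n" using card_image[OF inj] by simp
  have "card (insert z ((\<lambda>k. \<gamma>^k) ` {..<2*n})) = 2*n + 1"
    using zn ci by (subst card_insert_disjoint) auto
  moreover have "card (insert z ((\<lambda>k. \<gamma>^k) ` {..<2*n})) \<le> card {x. poly ?p x = 0}"
    by (rule card_mono[OF poly_roots_finite[OF p0] sub])
  ultimately show False using card_poly_roots_bound[OF p0] deg by simp
qed

lemma root_2n_pm: assumes "z^(2*n) = 1" shows "\<exists>k<n. z = \<gamma>^k \<or> z = -(\<gamma>^k)"
proof -
  obtain k where k: "k < 2*n" "z = \<gamma>^k" using root_2n_is_pow[OF assms] by auto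
  show ?thesis
  proof (cases "k < n")
    case True then show ?thesis using k by auto
  next
    case False
    then have "\<gamma>^k = \<gamma>^n * \<gamma>^(k-n)" by (simp add: power_add[symmetric])
    then have "z = -(\<gamma>^(k-n))" using k g_n by simp
    moreover have "k - n < n" using k False by simp
    ultimately show ?thesis by auto
  qed
qed

lemma frob3: "(a + b)^3 = a^3 + (b::'b)^3"
proof -
  have "(a+b)^3 = a^3 + b^3 + 3*(a^2*b + a*b^2)" by (simp add: power3_eq_cube power2_eq_square algebra_simps)
  then show ?thesis using three by simp
qed

lemma frob: "(a + b)^(3^k) = a^(3^k) + (b::'b)^(3^k)"
proof (induction k)
  case 0 then show ?case by simp
next
  case (Suc k)
  have "(a+b)^(3^Suc k) = ((a+b)^(3^k))^3" by (simp add: power_mult[symmetric] mult.commute)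
  also have "\<dots> = (a^(3^k))^3 + (b^(3^k))^3" using Suc frob3 by simp
  also have "\<dots> = a^(3^Suc k) + b^(3^Suc k)" by (simp add: power_mult[symmetric] mult.commute)
  finally show ?case .
qed

lemma frob_sum: "finite S \<Longrightarrow> (\<Sum>i\<in>S. f i)^(3^k) = (\<Sum>i\<in>S. (f i :: 'b)^(3^k))"
  by (induction S rule: finite_induct) (simp_all add: frob)

lemma frob_neg: "(- a)^(3^k) = - ((a::'b)^(3^k))"
  by (simp add: power_minus_odd)

lemma emb_frob: "(gf3_emb c :: 'b)^(3^k) = gf3_emb c"
  using emb_cases[of c] by (auto simp: power_minus_odd)

definition ev :: "gf3 poly \<Rightarrow> 'b \<Rightarrow> 'b" where
  "ev p z = poly (map_poly gf3_emb p) z"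

lemma ev_sum: "ev p z = (\<Sum>i\<le>degree p. gf3_emb (coeff p i) * z^i)"
  unfolding ev_def by (simp add: poly_altdef)

lemma ev_frob: "ev p (z^(3^k)) = (ev p z)^(3^k)"
proof -
  have "(ev p z)^(3^k) = (\<Sum>i\<le>degree p. (gf3_emb (coeff p i) * z^i)^(3^k))"
    unfolding ev_sum by (rule frob_sum) simp
  also have "\<dots> = (\<Sum>i\<le>degree p. gf3_emb (coeff p i) * (z^(3^k))^i)"
    by (simp add: power_mult_distrib emb_frob power_mult[symmetric] mult.commute)
  finally show ?thesis unfolding ev_sum by simp
qed

lemma ev_mult: "ev (p * r) z = ev p z * ev r z"
  unfolding ev_def by (simp add: EP.hom_mult)

lemma ev_add: "ev (p + r) z = ev p z + ev r z"
  unfolding ev_def by (simp add: EP.hom_add)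

lemma ev_diff: "ev (p - r) z = ev p z - ev r z"
  unfolding ev_def by (simp add: EP.hom_minus)

lemma ev_monom: "ev (monom c k) z = gf3_emb c * z^k"
  unfolding ev_def by (simp add: poly_monom)

lemma ev_one: "ev 1 z = 1"
  unfolding ev_def by simp

lemma ev_zero: "ev 0 z = 0"
  unfolding ev_def by simp

end


context setting begin

definition Pb :: "'b poly" where "Pb = (\<Prod>j<2*l. [:-(\<gamma>^(3^j)), 1:])"

lemma Pb_lead: "lead_coeff Pb = 1"
  unfolding Pb_def lead_coeff_prod by simp

lemma Pb_deg: "degree Pb = 2*l"
  unfolding Pb_def by (subst degree_prod_eq_sum_degree) auto

lemma Pb_roots: "poly Pb z = 0 \<longleftrightarrow> (\<exists>j<2*l. z = \<gamma>^(3^j))"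
  unfolding Pb_def poly_prod by (auto simp: prod_zero_iff)

interpretation C3: comm_ring_hom "\<lambda>c::'b. c^3"
  by unfold_locales (simp_all add: frob3 power_mult_distrib)

interpretation C3P: map_poly_comm_ring_hom "\<lambda>c::'b. c^3" ..

lemma g_pow_3_2l: "\<gamma>^(3^(2*l)) = \<gamma>"
proof -
  have "\<gamma>^(3^(2*l)) = \<gamma>^(3^(2*l) mod (2*n))" by (rule g_pow_mod)
  then show ?thesis using e_period by simp
qed

lemma Pb_frob: "map_poly (\<lambda>c. c^3) Pb = Pb"
proof -
  define f where "f j = [:-(\<gamma>^(3^j)), 1:]" for j
  have "map_poly (\<lambda>c. c^3) Pb = (\<Prod>j<2*l. map_poly (\<lambda>c. c^3) (f j))"
    unfolding Pb_def f_def by (rule C3P.hom_prod)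
  also have "\<dots> = (\<Prod>j<2*l. f (Suc j))"
  proof (rule prod.cong[OF refl])
    fix j
    have "(\<gamma>^(3^j))^3 = \<gamma>^(3^Suc j)" by (simp add: power_mult[symmetric] mult.commute)
    then show "map_poly (\<lambda>c. c^3) (f j) = f (Suc j)"
      unfolding f_def by (simp add: power_minus_odd)
  qed
  also have "\<dots> = (\<Prod>j<2*l. f j)"
  proof -
    have a: "(\<Prod>j<Suc (2*l). f j) = f 0 * (\<Prod>j<2*l. f (Suc j))" by (rule prod.lessThan_Suc_shift)
    have b: "(\<Prod>j<Suc (2*l). f j) = (\<Prod>j<2*l. f j) * f (2*l)" by (rule prod.lessThan_Suc)
    have c: "f (2*l) = f 0" unfolding f_def using g_pow_3_2l by simp
    have d: "f 0 \<noteq> 0" unfolding f_def by simp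
    from a b c d show ?thesis by (simp add: mult.commute)
  qed
  also have "\<dots> = Pb" unfolding Pb_def f_def ..
  finally show ?thesis .
qed

lemma Pb_coeff: "(coeff Pb i)^3 = coeff Pb i"
proof -
  have "coeff (map_poly (\<lambda>c. c^3) Pb) i = (coeff Pb i)^3" by (simp add: coeff_map_poly)
  then show ?thesis using Pb_frob by simp
qed

lemma cube_fixed: assumes "(c::'b)^3 = c" shows "c = 0 \<or> c = 1 \<or> c = -1"
proof -
  have "c * (c - 1) * (c + 1) = c^3 - c" by (simp add: power3_eq_cube algebra_simps)
  then have "c * (c - 1) * (c + 1) = 0" using assms by simp
  then show ?thesis by (auto simp: eq_neg_iff_add_eq_0)
qed

definition bk3 :: "'b \<Rightarrow> gf3" where
  "bk3 c = (if c = 0 then 0 else if c = 1 then 1 else -1)"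

definition P0 :: "gf3 poly" where "P0 = map_poly bk3 Pb"

lemma P0_map: "map_poly gf3_emb P0 = Pb"
proof (rule poly_eqI)
  fix i
  have b0: "bk3 0 = 0" unfolding bk3_def by simp
  have c1: "coeff (map_poly gf3_emb P0) i = (gf3_emb (coeff P0 i) :: 'b)" by (rule coeff_map_poly) (rule emb_zero)
  have c2: "coeff P0 i = bk3 (coeff Pb i)" unfolding P0_def by (rule coeff_map_poly) (rule b0)
  have "coeff (map_poly gf3_emb P0) i = (gf3_emb (bk3 (coeff Pb i)) :: 'b)" using c1 c2 by simp
  also have "\<dots> = coeff Pb i"
    using cube_fixed[OF Pb_coeff[of i]] one_ne_neg unfolding bk3_def
    by (auto simp: emb_one emb_zero E.hom_uminus)
  finally show "coeff (map_poly gf3_emb P0) i = coeff Pb i" .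
qed

lemma ev_P0: "ev P0 z = poly Pb z"
  unfolding ev_def P0_map ..

lemma P0_deg: "degree P0 = 2*l"
proof -
  have "degree (map_poly gf3_emb P0 :: 'b poly) = degree P0" by simp
  then show ?thesis using P0_map Pb_deg by simp
qed

lemma P0_lead: "lead_coeff P0 = 1"
proof -
  have d: "degree (map_poly gf3_emb P0 :: 'b poly) = degree P0" by simp
  have "lead_coeff (map_poly gf3_emb P0 :: 'b poly) = coeff (map_poly gf3_emb P0 :: 'b poly) (degree P0)"
    using d by simp
  also have "\<dots> = gf3_emb (lead_coeff P0)" by (rule coeff_map_poly) (rule emb_zero)
  finally have "gf3_emb (lead_coeff P0) = (lead_coeff Pb :: 'b)"
    using P0_map by simp
  then have "gf3_emb (lead_coeff P0) = (1::'b)" using Pb_lead by simp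
  then show ?thesis by simp
qed

lemma P0_nz: "P0 \<noteq> 0" using P0_lead by auto

lemma ev_P0_g: "ev P0 \<gamma> = 0"
  unfolding ev_P0 Pb_roots by (rule exI[of _ 0]) (use l2 in auto)

lemma ev_root_pow: "ev p \<gamma> = 0 \<Longrightarrow> ev p (\<gamma>^(3^j)) = 0"
  using ev_frob[of p \<gamma> j] by simp

lemma pow3_inj: "inj_on (\<lambda>j. \<gamma>^(3^j)) {..<2*l}"
proof (rule inj_onI)
  fix i j assume "i \<in> {..<2*l}" "j \<in> {..<2*l}" "\<gamma>^(3^i) = \<gamma>^(3^j)"
  then show "i = j" using e_inj unfolding inj_on_def by (simp add: g_pow_eq_iff)
qed

lemma deg_lower: assumes "p \<noteq> 0" "ev p \<gamma> = 0" shows "2*l \<le> degree p"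
proof -
  let ?E = "map_poly gf3_emb p :: 'b poly"
  have E0: "?E \<noteq> 0" using assms(1) by simp
  have sub: "(\<lambda>j. \<gamma>^(3^j)) ` {..<2*l} \<subseteq> {z. poly ?E z = 0}"
    using ev_root_pow[OF assms(2)] unfolding ev_def by auto
  have "2*l = card ((\<lambda>j. \<gamma>^(3^j)) ` {..<2*l})" using card_image[OF pow3_inj] by simp
  also have "\<dots> \<le> card {z. poly ?E z = 0}" by (rule card_mono[OF poly_roots_finite[OF E0] sub])
  also have "\<dots> \<le> degree ?E" by (rule card_poly_roots_bound[OF E0])
  finally show ?thesis by simp
qed

lemma P0_min: "is_min_poly_GF3 \<gamma> P0"
  unfolding is_min_poly_GF3_def using P0_lead ev_P0_g deg_lower P0_deg
  by (auto simp: ev_def)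

lemma minpoly_nz: "is_min_poly_GF3 \<gamma> M \<Longrightarrow> M \<noteq> 0"
  unfolding is_min_poly_GF3_def by auto

lemma minpoly_ev: "is_min_poly_GF3 \<gamma> M \<Longrightarrow> ev M \<gamma> = 0"
  unfolding is_min_poly_GF3_def ev_def by auto

lemma minpoly_deg: assumes "is_min_poly_GF3 \<gamma> M" shows "degree M = 2*l"
proof -
  have "degree M \<le> degree P0" using assms P0_nz ev_P0_g unfolding is_min_poly_GF3_def ev_def by auto
  moreover have "2*l \<le> degree M" using deg_lower minpoly_nz[OF assms] minpoly_ev[OF assms] by simp
  ultimately show ?thesis using P0_deg by simp
qed

lemma minpoly_dvd: assumes "is_min_poly_GF3 \<gamma> M" "ev p \<gamma> = 0" shows "M dvd p"
proof -
  have M0: "M \<noteq> 0" using minpoly_nz[OF assms(1)] .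
  have "p mod M = p - M * (p div M)" by (simp add: minus_div_mult_eq_mod[symmetric])
  then have ev0: "ev (p mod M) \<gamma> = 0" using assms minpoly_ev[OF assms(1)] by (simp add: ev_diff ev_mult)
  show ?thesis
  proof (rule ccontr)
    assume "\<not> M dvd p"
    then have nz: "p mod M \<noteq> 0" by (simp add: mod_eq_0_iff_dvd)
    then have "degree (p mod M) < degree M" using degree_mod_less'[OF M0] by simp
    moreover have "degree M \<le> degree (p mod M)" using assms(1) nz ev0 unfolding is_min_poly_GF3_def ev_def by auto
    ultimately show False by simp
  qed
qed

lemma minpoly_roots: assumes "is_min_poly_GF3 \<gamma> M" "ev M z = 0" shows "\<exists>j<2*l. z = \<gamma>^(3^j)"
proof -
  from minpoly_dvd[OF assms(1) ev_P0_g] obtain k where k: "P0 = M * k" by (rule dvdE)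
  have "ev P0 z = 0" unfolding k ev_mult using assms(2) by simp
  then show ?thesis unfolding ev_P0 Pb_roots .
qed

end


interpretation PV: vector_space "smult :: gf3 \<Rightarrow> gf3 poly \<Rightarrow> gf3 poly"
  by unfold_locales (simp_all add: smult_add_right smult_add_left)

lemma code_dim_PV: "code_dim C = PV.dim C"
  unfolding code_dim_def ..

lemma poly_sum_monoms_lt: "degree (w::'a::comm_ring_1 poly) < k \<Longrightarrow> w = (\<Sum>i<k. monom (coeff w i) i)"
proof (rule poly_eqI)
  fix j assume d: "degree w < k"
  have "coeff (\<Sum>i<k. monom (coeff w i) i) j = (\<Sum>i<k. if i = j then coeff w i else 0)"
    by (simp add: coeff_sum coeff_monom)
  also have "\<dots> = (if j < k then coeff w j else 0)" by (simp add: sum.delta')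
  also have "\<dots> = coeff w j" using d by (auto simp: coeff_eq_0)
  finally show "coeff w j = coeff (\<Sum>i<k. monom (coeff w i) i) j" by simp
qed

lemma dim_multiples:
  fixes R :: "gf3 poly"
  assumes R0: "R \<noteq> 0" and dR: "degree R \<le> N"
  shows "PV.dim {v. degree v < N \<and> R dvd v} = N - degree R"
proof -
  define k where "k = N - degree R"
  define B where "B = (\<lambda>i. R * monom 1 i) ` {..<k}"
  let ?V = "{v. degree v < N \<and> R dvd v}"
  have inj: "inj_on (\<lambda>i. R * monom 1 i) {..<k}"
  proof (rule inj_onI)
    fix i j assume "R * monom 1 i = R * monom 1 j"
    then have "monom (1::gf3) i = monom 1 j" using R0 by simp
    then show "i = j" by (simp add: monom_eq_iff')
  qed
  have cardB: "card B = k" unfolding B_def using card_image[OF inj] by simp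
  have BV: "B \<subseteq> ?V"
  proof
    fix x assume "x \<in> B"
    then obtain i where i: "i < k" "x = R * monom 1 i" unfolding B_def by auto
    have "degree x = degree R + i" using i R0 by (simp add: degree_mult_eq degree_monom_eq)
    then show "x \<in> ?V" using i dR unfolding k_def by auto
  qed
  have VB: "?V \<subseteq> PV.span B"
  proof
    fix v assume "v \<in> ?V"
    then have vv: "degree v < N" "R dvd v" by auto
    from vv(2) obtain w where vw: "v = R * w" by (rule dvdE)
    have v: "v = R * w" "degree v < N" using vw vv by auto
    show "v \<in> PV.span B"
    proof (cases "w = 0")
      case True then show ?thesis using v PV.span_zero by simp
    next
      case False
      then have "degree v = degree R + degree w" using v R0 by (simp add: degree_mult_eq)
      then have dw: "degree w < k" using v unfolding k_def by simp
      have "v = R * (\<Sum>i<k. monom (coeff w i) i)" using v poly_sum_monoms_lt[OF dw] by simp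
      also have "\<dots> = (\<Sum>i<k. smult (coeff w i) (R * monom 1 i))"
        by (simp add: sum_distrib_left smult_monom mult_smult_right[symmetric])
      finally have veq: "v = (\<Sum>i<k. smult (coeff w i) (R * monom 1 i))" .
      show ?thesis unfolding veq
        by (intro PV.span_sum PV.span_scale PV.span_base) (auto simp: B_def)
    qed
  qed
  have indep: "PV.independent B"
  proof (rule PV.independent_if_scalars_zero)
    show "finite B" unfolding B_def by simp
  next
    fix f x assume sum0: "(\<Sum>x\<in>B. smult (f x) x) = 0" and xB: "x \<in> B"
    then obtain j where j: "j < k" "x = R * monom 1 j" unfolding B_def by auto
    have "(\<Sum>x\<in>B. smult (f x) x) = (\<Sum>i<k. smult (f (R * monom 1 i)) (R * monom 1 i))"
      unfolding B_def by (rule sum.reindex[OF inj, unfolded comp_def])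
    also have "\<dots> = R * (\<Sum>i<k. monom (f (R * monom 1 i)) i)"
      by (simp add: sum_distrib_left smult_monom mult_smult_right[symmetric])
    finally have "R * (\<Sum>i<k. monom (f (R * monom 1 i)) i) = 0" using sum0 by simp
    then have s0: "(\<Sum>i<k. monom (f (R * monom 1 i)) i) = 0" using R0 by simp
    have "coeff (\<Sum>i<k. monom (f (R * monom 1 i)) i) j = (\<Sum>i<k. if i = j then f (R * monom 1 i) else 0)"
      by (simp add: coeff_sum coeff_monom)
    also have "\<dots> = f (R * monom 1 j)" using j by (simp add: sum.delta')
    finally show "f x = 0" using s0 j by simp
  qed
  have "card B = PV.dim ?V" by (rule PV.basis_card_eq_dim[OF BV VB indep])
  then show ?thesis using cardB k_def by simp
qed

lemma hdist_hweight: "hdist n c c' = hweight n (c - c')"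
  unfolding hdist_def hweight_def by simp

lemma hweight_le: "hweight n v \<le> n"
proof -
  have "{i. i < n \<and> coeff v i \<noteq> 0} \<subseteq> {..<n}" by auto
  then have "card {i. i < n \<and> coeff v i \<noteq> 0} \<le> card {..<n}" by (rule card_mono[rotated]) simp
  then show ?thesis unfolding hweight_def by simp
qed

lemma min_dist_ge:
  assumes cl: "\<And>c c'. c \<in> D \<Longrightarrow> c' \<in> D \<Longrightarrow> c - c' \<in> D"
    and two: "a \<in> D" "b \<in> D" "a \<noteq> b"
    and wt: "\<And>v. v \<in> D \<Longrightarrow> v \<noteq> 0 \<Longrightarrow> d0 \<le> hweight n v"
  shows "d0 \<le> min_dist n D"
proof -
  let ?A = "{hdist n c c' | c c'. c \<in> D \<and> c' \<in> D \<and> c \<noteq> c'}"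
  have fin: "finite ?A"
  proof (rule finite_subset)
    show "?A \<subseteq> {..n}" using hweight_le by (auto simp: hdist_hweight)
  qed simp
  have ne: "?A \<noteq> {}" using two by blast
  have "\<forall>x\<in>?A. d0 \<le> x"
  proof
    fix x assume "x \<in> ?A"
    then obtain c c' where "x = hdist n c c'" "c \<in> D" "c' \<in> D" "c \<noteq> c'" by blast
    then show "d0 \<le> x" using wt[of "c - c'"] cl by (simp add: hdist_hweight)
  qed
  then show ?thesis unfolding min_dist_def using fin ne by simp
qed

lemma min_dist_eq:
  assumes cl: "\<And>c c'. c \<in> D \<Longrightarrow> c' \<in> D \<Longrightarrow> c - c' \<in> D"
    and z: "0 \<in> D" and v: "v \<in> D" "v \<noteq> 0" "hweight n v = d0"
    and wt: "\<And>v. v \<in> D \<Longrightarrow> v \<noteq> 0 \<Longrightarrow> d0 \<le> hweight n v"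
  shows "min_dist n D = d0"
proof -
  let ?A = "{hdist n c c' | c c'. c \<in> D \<and> c' \<in> D \<and> c \<noteq> c'}"
  have fin: "finite ?A"
  proof (rule finite_subset)
    show "?A \<subseteq> {..n}" using hweight_le by (auto simp: hdist_hweight)
  qed simp
  have "d0 \<in> ?A"
  proof -
    have "hdist n v 0 = d0" using v by (simp add: hdist_hweight)
    then show ?thesis using v z by blast
  qed
  moreover have "\<And>x. x \<in> ?A \<Longrightarrow> d0 \<le> x"
  proof -
    fix x assume "x \<in> ?A"
    then obtain c c' where "x = hdist n c c'" "c \<in> D" "c' \<in> D" "c \<noteq> c'" by blast
    then show "d0 \<le> x" using wt[of "c - c'"] cl by (simp add: hdist_hweight)
  qed
  ultimately show ?thesis unfolding min_dist_def by (intro Min_eqI[OF fin]) auto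
qed

lemma vdm_zero:
  fixes d z :: "nat \<Rightarrow> 'b::field"
  assumes fin: "finite S" and inj: "inj_on z S"
    and sums: "\<And>k. k < card S \<Longrightarrow> (\<Sum>i\<in>S. d i * z i ^ k) = 0"
    and jS: "j \<in> S"
  shows "d j = 0"
proof -
  define L where "L = (\<Prod>i\<in>S-{j}. [:- z i, 1:])"
  have degL: "degree L = card S - 1"
    unfolding L_def using fin jS by (subst degree_prod_eq_sum_degree) auto
  have Lz: "poly L (z i) = 0" if "i \<in> S" "i \<noteq> j" for i
    unfolding L_def poly_prod using that fin by (auto simp: prod_zero_iff intro!: bexI[of _ i])
  have Lj: "poly L (z j) \<noteq> 0"
  proof
    assume "poly L (z j) = 0"
    then obtain i where "i \<in> S - {j}" "z j = z i" unfolding L_def poly_prod using fin by (auto simp: prod_zero_iff)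
    then show False using inj jS unfolding inj_on_def by auto
  qed
  have "(\<Sum>i\<in>S. d i * poly L (z i)) = (\<Sum>i\<in>S. d i * (\<Sum>k\<le>degree L. coeff L k * z i ^ k))"
    by (simp add: poly_altdef)
  also have "\<dots> = (\<Sum>k\<le>degree L. coeff L k * (\<Sum>i\<in>S. d i * z i ^ k))"
    by (simp add: sum_distrib_left sum_distrib_right mult_ac sum.swap[of _ S])
  also have "\<dots> = 0"
  proof (rule sum.neutral, rule ballI)
    fix k assume "k \<in> {..degree L}"
    then have "k < card S" using degL jS fin card_gt_0_iff[of S] by auto
    then show "coeff L k * (\<Sum>i\<in>S. d i * z i ^ k) = 0" using sums by simp
  qed
  finally have s: "(\<Sum>i\<in>S. d i * poly L (z i)) = 0" .
  have "(\<Sum>i\<in>S. d i * poly L (z i)) = d j * poly L (z j) + (\<Sum>i\<in>S-{j}. d i * poly L (z i))"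
    using fin jS by (simp add: sum.remove)
  also have "(\<Sum>i\<in>S-{j}. d i * poly L (z i)) = 0" using Lz by simp
  finally show ?thesis using s Lj by simp
qed


context setting begin

lemma ev_sum_n: assumes "degree v < n" shows "ev v z = (\<Sum>i<n. gf3_emb (coeff v i) * z^i)"
proof -
  have "ev v z = (\<Sum>i\<le>degree v. gf3_emb (coeff v i) * z^i)" by (rule ev_sum)
  also have "\<dots> = (\<Sum>i<n. gf3_emb (coeff v i) * z^i)"
  proof (rule sum.mono_neutral_left)
    show "{..degree v} \<subseteq> {..<n}" using assms by auto
    show "\<forall>i\<in>{..<n} - {..degree v}. gf3_emb (coeff v i) * z ^ i = 0"
      by (auto simp: coeff_eq_0 emb_zero)
  qed simp
  finally show ?thesis .
qed

lemma ev_sum_supp: assumes "degree v < n"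
  shows "ev v z = (\<Sum>i\<in>{i. i < n \<and> coeff v i \<noteq> 0}. gf3_emb (coeff v i) * z^i)"
proof -
  have "ev v z = (\<Sum>i<n. gf3_emb (coeff v i) * z^i)" by (rule ev_sum_n[OF assms])
  also have "\<dots> = (\<Sum>i\<in>{i. i < n \<and> coeff v i \<noteq> 0}. gf3_emb (coeff v i) * z^i)"
    by (rule sum.mono_neutral_right) (auto simp: emb_zero)
  finally show ?thesis .
qed

lemma supp_ne: assumes "v \<noteq> 0" "degree v < n" shows "degree v \<in> {i. i < n \<and> coeff v i \<noteq> 0}"
  using assms by auto

definition X :: "gf3 poly" where "X = monom 1 n + 1"

lemma ev_X: "ev X z = z^n + 1"
  unfolding X_def by (simp add: ev_add ev_monom ev_one emb_one)

lemma X_deg: "degree X = n"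
  unfolding X_def using n_ge by (subst degree_add_eq_left) (simp_all add: degree_monom_eq)

lemma X_nz: "X \<noteq> 0" using X_deg n_ge by auto

lemma ev_X_g: "ev X \<gamma> = 0" unfolding ev_X g_n by simp

lemma odd_root_X: "odd e \<Longrightarrow> ev X (\<gamma>^e) = 0"
proof -
  assume "odd e"
  have "(\<gamma>^e)^n = (\<gamma>^n)^e" by (metis power_mult mult.commute)
  then show ?thesis unfolding ev_X g_n using \<open>odd e\<close> by simp
qed

end

locale code_setting = setting +
  fixes M :: "gf3 poly"
  assumes minM: "is_min_poly_GF3 \<gamma> M"
begin

definition g :: "gf3 poly" where "g = X div M"

lemma M_dvd_X: "M dvd X" by (rule minpoly_dvd[OF minM ev_X_g])

lemma X_eq: "X = M * g" unfolding g_def using M_dvd_X by simp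

lemma gp_nz: "g \<noteq> 0" using X_eq X_nz by auto

lemma M_deg: "degree M = 2*l" by (rule minpoly_deg[OF minM])

lemma g_deg: "degree g = n - 2*l"
proof -
  have "degree X = degree M + degree g" using X_eq minpoly_nz[OF minM] gp_nz by (simp add: degree_mult_eq)
  then show ?thesis using X_deg M_deg by simp
qed

lemma two_m_le: "2*m + 1 \<le> (3::nat)^m"
proof (induction m)
  case 0 then show ?case by simp
next
  case (Suc m)
  have "(1::nat) \<le> 3^m" by simp
  then show ?case using Suc by simp
qed

lemma two_l_lt_n: "2*l < n"
  using two_m_le[of l] n_def by simp

lemma code_eq: "negacyclic_code n M = {v. degree v < n \<and> g dvd v}"
proof
  show "negacyclic_code n M \<subseteq> {v. degree v < n \<and> g dvd v}"
  proof
    fix v assume "v \<in> negacyclic_code n M"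
    then obtain a where v: "v = (a * g) mod X" unfolding negacyclic_code_def X_def g_def by auto
    have d: "degree v < n"
    proof (cases "v = 0")
      case True then show ?thesis using n_ge by simp
    next
      case False then show ?thesis using degree_mod_less'[OF X_nz, of "a*g"] v X_deg by simp
    qed
    have "v = a * g - X * ((a*g) div X)" unfolding v by (simp add: minus_div_mult_eq_mod[symmetric] mult.commute)
    also have "\<dots> = g * (a - M * ((a*g) div X))" unfolding X_eq by (simp add: algebra_simps)
    finally have "g dvd v" by simp
    then show "v \<in> {v. degree v < n \<and> g dvd v}" using d by simp
  qed
next
  show "{v. degree v < n \<and> g dvd v} \<subseteq> negacyclic_code n M"
  proof
    fix v assume "v \<in> {v. degree v < n \<and> g dvd v}"
    then have d: "degree v < n" and gd: "g dvd v" by auto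
    from gd obtain w where w: "v = g * w" by (rule dvdE)
    have "v mod X = v" using d X_deg by (simp add: mod_poly_less)
    then have "v = (w * g) mod (monom 1 n + 1)" using w unfolding X_def by (simp add: mult.commute)
    then show "v \<in> negacyclic_code n M" unfolding negacyclic_code_def g_def X_def by auto
  qed
qed

lemma code_dim_C: "code_dim (negacyclic_code n M) = 2*l"
proof -
  have "code_dim (negacyclic_code n M) = n - degree g"
    unfolding code_eq code_dim_PV by (rule dim_multiples[OF gp_nz]) (simp add: g_deg)
  then show ?thesis using g_deg two_l_lt_n by simp
qed

lemma code_diff: "c \<in> negacyclic_code n M \<Longrightarrow> c' \<in> negacyclic_code n M \<Longrightarrow> c - c' \<in> negacyclic_code n M"
  unfolding code_eq by (auto intro: degree_diff_less dvd_diff)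

lemma code_zero: "0 \<in> negacyclic_code n M"
  unfolding code_eq using n_ge by simp

lemma code_g: "g \<in> negacyclic_code n M"
  unfolding code_eq using g_deg two_l_lt_n l2 by simp

lemma g_root: assumes "2*k < 3^l + 1" shows "ev g (\<gamma>^(3^l + 2 + 2*k)) = 0"
proof -
  define e where "e = 3^l + 2 + 2*k"
  have oe: "odd e" unfolding e_def by simp
  have "2*k \<noteq> 3^l" using q_odd by (metis dvd_triv_left)
  then have elt: "e < 2*n" unfolding e_def n_def using assms by simp
  have egt: "3^l < e" unfolding e_def by simp
  have "ev M (\<gamma>^e) * ev g (\<gamma>^e) = 0" using odd_root_X[OF oe] unfolding X_eq ev_mult .
  moreover have "ev M (\<gamma>^e) \<noteq> 0"
  proof
    assume "ev M (\<gamma>^e) = 0"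
    then obtain j where j: "j < 2*l" "\<gamma>^e = \<gamma>^(3^j)" using minpoly_roots[OF minM] by blast
    then have "e mod (2*n) = 3^j mod (2*n)" using g_pow_eq_iff by simp
    then have "e = 3^j mod (2*n)" using elt by simp
    then show False using e_le[OF j(1)] egt by simp
  qed
  ultimately show ?thesis unfolding e_def by simp
qed

lemma bch: assumes vC: "v \<in> negacyclic_code n M" and v0: "v \<noteq> 0"
  shows "3^l + 3 \<le> 2 * hweight n v"
proof (rule ccontr)
  assume "\<not> ?thesis"
  then have small: "2 * hweight n v < 3^l + 3" by simp
  define S where "S = {i. i < n \<and> coeff v i \<noteq> 0}"
  have dv: "degree v < n" and gv: "g dvd v" using vC unfolding code_eq by auto
  have finS: "finite S" unfolding S_def by simp
  have cS: "card S = hweight n v" unfolding S_def hweight_def ..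
  define d where "d i = gf3_emb (coeff v i) * \<gamma>^((3^l+2)*i)" for i
  define z where "z i = \<gamma>^(2*i)" for i
  have injz: "inj_on z S"
  proof (rule inj_onI)
    fix i j assume "i \<in> S" "j \<in> S" "z i = z j"
    then have "i < n" "j < n" "(2*i) mod (2*n) = (2*j) mod (2*n)" unfolding S_def z_def using g_pow_eq_iff by auto
    then show "i = j" by simp
  qed
  have sums: "(\<Sum>i\<in>S. d i * z i ^ k) = 0" if "k < card S" for k
  proof -
    have k2: "2*k < 3^l + 1" using that cS small by linarith
    have "ev v (\<gamma>^(3^l + 2 + 2*k)) = 0"
    proof -
      from gv obtain u where "v = g * u" by (rule dvdE)
      then show ?thesis using g_root[OF k2] by (simp add: ev_mult)
    qed
    moreover have "ev v (\<gamma>^(3^l + 2 + 2*k)) = (\<Sum>i\<in>S. d i * z i ^ k)"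
      unfolding ev_sum_supp[OF dv] S_def[symmetric]
    proof (rule sum.cong[OF refl])
      fix i
      have "(\<gamma>^(3^l + 2 + 2*k))^i = \<gamma>^((3^l+2)*i) * (\<gamma>^(2*i))^k"
        by (simp add: power_mult[symmetric] power_add[symmetric] algebra_simps)
      then show "gf3_emb (coeff v i) * (\<gamma>^(3^l + 2 + 2*k))^i = d i * z i ^ k"
        unfolding d_def z_def by simp
    qed
    ultimately show ?thesis by simp
  qed
  have jS: "degree v \<in> S" unfolding S_def using supp_ne[OF v0 dv] by simp
  have "d (degree v) = 0" by (rule vdm_zero[OF finS injz sums jS])
  then show False using v0 g_nz unfolding d_def by simp
qed

end


lemma card_polys: assumes "0 < k" shows "card {b :: gf3 poly. degree b < k} = 3^k"
proof -
  let ?B = "{b :: gf3 poly. degree b < k}"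
  let ?P = "PiE {..<k} (\<lambda>_. (UNIV :: gf3 set))"
  have bij: "bij_betw (\<lambda>b. restrict (coeff b) {..<k}) ?B ?P"
  proof (rule bij_betwI')
    fix b b' assume b: "b \<in> ?B" and b': "b' \<in> ?B"
    show "(restrict (coeff b) {..<k} = restrict (coeff b') {..<k}) = (b = b')"
    proof
      assume eq: "restrict (coeff b) {..<k} = restrict (coeff b') {..<k}"
      show "b = b'"
      proof (rule poly_eqI)
        fix i
        show "coeff b i = coeff b' i"
        proof (cases "i < k")
          case True
          then show ?thesis using fun_cong[OF eq, of i] by simp
        next
          case False
          then show ?thesis using b b' by (simp add: coeff_eq_0)
        qed
      qed
    qed simp
  next
    fix b assume "b \<in> ?B"
    show "restrict (coeff b) {..<k} \<in> ?P" by simp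
  next
    fix f assume f: "f \<in> ?P"
    define b where "b = (\<Sum>i<k. monom (f i) i)"
    have cb: "coeff b i = (if i < k then f i else 0)" for i
      unfolding b_def by (simp add: coeff_sum coeff_monom sum.delta')
    have db: "degree b < k"
    proof (cases "b = 0")
      case True then show ?thesis using assms by simp
    next
      case False
      then have "coeff b (degree b) \<noteq> 0" by simp
      then show ?thesis using cb[of "degree b"] by (auto split: if_splits)
    qed
    have "restrict (coeff b) {..<k} = f"
    proof
      fix i show "restrict (coeff b) {..<k} i = f i"
        using f cb[of i] by (auto simp: PiE_def extensional_def)
    qed
    then show "\<exists>b\<in>?B. f = restrict (coeff b) {..<k}" using db by auto
  qed
  have "card ?B = card ?P" by (rule bij_betw_same_card[OF bij])
  also have "\<dots> = 3^k" by (simp add: card_PiE card_tri)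
  finally show ?thesis .
qed

context setting begin

definition iota where "iota = \<gamma>^(2*n-1)"

lemma iota_g: "iota^a * \<gamma>^a = 1"
proof -
  have "iota * \<gamma> = 1" unfolding iota_def using g_2n n_ge
    by (metis power_Suc2 Suc_diff_1 mult_pos_pos pos2 zero_less_numeral less_le_trans order_less_le_trans zero_less_one le_numeral_extra(1) nat_0_less_mult_iff numeral_le_iff)
  then show ?thesis by (metis power_mult_distrib power_one)
qed

lemma iota_inv: "iota^a = inverse (\<gamma>^a)"
proof -
  have "\<gamma>^a * iota^a = 1" using iota_g[of a] by (simp add: mult.commute)
  from inverse_unique[OF this] show ?thesis by simp
qed

lemma iota_pow_cong: "\<gamma>^a = \<gamma>^b \<Longrightarrow> iota^a = iota^b"
  unfolding iota_inv by simp

lemma iota_prim: "primitive_root_unity (2*n) iota"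
  unfolding primitive_root_unity_def
proof (intro conjI allI impI)
  show "iota^(2*n) = 1" using iota_g[of "2*n"] g_2n by simp
next
  fix k assume k: "0 < k \<and> k < 2*n"
  show "iota^k \<noteq> 1"
  proof
    assume "iota^k = 1"
    then have "\<gamma>^k = 1" using iota_g[of k] by simp
    then show False using g_prim k by simp
  qed
qed

end

context code_setting begin

lemma of_nat_n_gf3: "(of_nat n :: gf3) = 1"
proof -
  have "(of_nat (3^l) :: gf3) = 3^l" by simp
  also have "\<dots> = 0" using gf3_three l2 by simp
  finally show ?thesis using n_def by simp
qed

lemma pderiv_X: "pderiv X = monom 1 (n-1)"
  unfolding X_def by (simp add: pderiv_add pderiv_monom of_nat_n_gf3)

lemma ev_g_nz: "ev g \<gamma> \<noteq> 0"
proof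
  assume G: "ev g \<gamma> = 0"
  have "pderiv X = M * pderiv g + g * pderiv M" unfolding X_eq by (rule pderiv_mult)
  then have "ev (pderiv X) \<gamma> = 0" using G minpoly_ev[OF minM] by (simp add: ev_add ev_mult)
  moreover have "ev (pderiv X) \<gamma> = \<gamma>^(n-1)" unfolding pderiv_X by (simp add: ev_monom emb_one)
  ultimately show False using g_nz by simp
qed

lemma odd_mod: "odd ((3::nat)^j mod (2*n))"
proof -
  have "(3::nat)^j mod (2*n) mod 2 = 3^j mod 2" by (rule mod_mod_cancel) simp
  moreover have "(3::nat)^j mod 2 = 1" using odd_iff_mod_2_eq_one[of "(3::nat)^j"] by simp
  ultimately show ?thesis by (simp add: odd_iff_mod_2_eq_one)
qed

lemma R_sub_Omega: "(\<lambda>j. \<gamma>^(3^j)) ` {..<2*l} \<subseteq> (\<lambda>t. \<gamma>^(2*t+1)) ` {..<n}"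
proof
  fix z assume "z \<in> (\<lambda>j. \<gamma>^(3^j)) ` {..<2*l}"
  then obtain j where z: "z = \<gamma>^(3^j)" by auto
  define r where "r = (3::nat)^j mod (2*n)"
  have "odd r" unfolding r_def by (rule odd_mod)
  then obtain t where t: "r = 2*t+1" by (metis oddE)
  have "r < 2*n" unfolding r_def using n_ge by simp
  then have "t < n" using t by simp
  moreover have "z = \<gamma>^(2*t+1)" using z g_pow_mod[of "3^j"] r_def t by simp
  ultimately show "z \<in> (\<lambda>t. \<gamma>^(2*t+1)) ` {..<n}" by auto
qed

lemma Omega_inj: "inj_on (\<lambda>t. \<gamma>^(2*t+1)) {..<n}"
proof (rule inj_onI)
  fix s t assume st: "s \<in> {..<n}" "t \<in> {..<n}" and e: "\<gamma>^(2*s+1) = \<gamma>^(2*t+1)"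
  from e have "(2*s+1) mod (2*n) = (2*t+1) mod (2*n)" by (simp only: g_pow_eq_iff)
  then show "s = t" using st by simp
qed

lemma dft: assumes du: "degree u < n" and dc: "degree c < n"
  shows "gf3_emb (\<Sum>i<n. coeff u i * coeff c i) = (\<Sum>t<n. ev u (iota^(2*t+1)) * ev c (\<gamma>^(2*t+1)))"
proof -
  define a where "a i = (gf3_emb (coeff u i) :: 'a)" for i
  define b where "b i = (gf3_emb (coeff c i) :: 'a)" for i
  define K where "K i j = (\<Sum>t<n. (iota^(2*t+1))^i * (\<gamma>^(2*t+1))^j)" for i j
  have K: "K i j = (if i = j then 1 else 0)" if ij: "i < n" "j < n" for i j
  proof -
    define w where "w = iota^i * \<gamma>^j"
    have trm: "(iota^(2*t+1))^i * (\<gamma>^(2*t+1))^j = w * (w^2)^t" for t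
      unfolding w_def by (simp add: power_mult[symmetric] power_mult_distrib[symmetric] algebra_simps)
    show ?thesis
    proof (cases "i = j")
      case True
      then have "w = 1" unfolding w_def by (simp add: iota_g)
      then have "K i j = of_nat n" unfolding K_def trm by simp
      also have "\<dots> = 1"
      proof -
        have "(of_nat (3^l) :: 'a) = 3^l" by simp
        also have "\<dots> = 0" using three l2 by simp
        finally show ?thesis using n_def by simp
      qed
      finally show ?thesis using True by simp
    next
      case False
      define m where "m = (2*n-1)*i + j"
      have wm: "w = \<gamma>^m" unfolding w_def m_def iota_def by (simp add: power_mult power_add)
      have w2n: "(w^2)^n = 1"
      proof -
        have "(w^2)^n = (\<gamma>^(2*n))^m" unfolding wm by (simp add: power_mult[symmetric] algebra_simps)
        then show ?thesis using g_2n by simp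
      qed
      have w21: "w^2 \<noteq> 1"
      proof
        assume "w^2 = 1"
        then have "\<gamma>^(2*m) = \<gamma>^0" unfolding wm by (simp add: power_mult[symmetric] mult.commute)
        then have "(2*m) mod (2*n) = 0 mod (2*n)" by (simp only: g_pow_eq_iff)
        then have "(2*m) mod (2*n) = 0" by simp
        then have "n dvd m" by (simp add: mod_eq_0_iff_dvd)
        then have "(m + i) mod n = i mod n" by (simp add: mod_add_left_eq[symmetric])
        moreover have "m + i = n * (2*i) + j"
        proof -
          have h1: "(2*n - 1 + 1) * i = n*(2*i)" using n_ge by simp
          have h2: "(2*n - 1 + 1) * i = (2*n-1)*i + i" by (simp add: add_mult_distrib)
          show ?thesis unfolding m_def using h1 h2 by linarith
        qed
        ultimately have "i mod n = j mod n" by simp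
        then show False using False ij by simp
      qed
      have "K i j = w * (\<Sum>t<n. (w^2)^t)" unfolding K_def trm by (simp add: sum_distrib_left)
      also have "(\<Sum>t<n. (w^2)^t) = 0" using geometric_sum[OF w21, of n] w2n by simp
      finally show ?thesis using False by simp
    qed
  qed
  have "(\<Sum>t<n. ev u (iota^(2*t+1)) * ev c (\<gamma>^(2*t+1)))
      = (\<Sum>t<n. (\<Sum>i<n. a i * (iota^(2*t+1))^i) * (\<Sum>j<n. b j * (\<gamma>^(2*t+1))^j))"
    unfolding ev_sum_n[OF du] ev_sum_n[OF dc] a_def b_def ..
  also have "\<dots> = (\<Sum>t<n. \<Sum>i<n. \<Sum>j<n. a i * b j * ((iota^(2*t+1))^i * (\<gamma>^(2*t+1))^j))"
  proof (rule sum.cong[OF refl])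
    fix t
    show "(\<Sum>i<n. a i * (iota^(2*t+1))^i) * (\<Sum>j<n. b j * (\<gamma>^(2*t+1))^j)
        = (\<Sum>i<n. \<Sum>j<n. a i * b j * ((iota^(2*t+1))^i * (\<gamma>^(2*t+1))^j))"
      unfolding sum_product by (intro sum.cong[OF refl]) (simp add: mult_ac)
  qed
  also have "\<dots> = (\<Sum>i<n. \<Sum>t<n. \<Sum>j<n. a i * b j * ((iota^(2*t+1))^i * (\<gamma>^(2*t+1))^j))"
    by (rule sum.swap)
  also have "\<dots> = (\<Sum>i<n. \<Sum>j<n. \<Sum>t<n. a i * b j * ((iota^(2*t+1))^i * (\<gamma>^(2*t+1))^j))"
    by (rule sum.cong[OF refl], rule sum.swap)
  also have "\<dots> = (\<Sum>i<n. \<Sum>j<n. a i * b j * K i j)"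
    unfolding K_def by (simp only: sum_distrib_left)
  also have "\<dots> = (\<Sum>i<n. a i * b i)"
  proof (rule sum.cong[OF refl])
    fix i assume i: "i \<in> {..<n}"
    then have "(\<Sum>j<n. a i * b j * K i j) = (\<Sum>j<n. if i = j then a i * b j else 0)"
      by (intro sum.cong) (auto simp: K)
    also have "\<dots> = a i * b i" using i by (simp add: sum.delta)
    finally show "(\<Sum>j<n. a i * b j * K i j) = a i * b i" .
  qed
  also have "\<dots> = gf3_emb (\<Sum>i<n. coeff u i * coeff c i)"
    unfolding a_def b_def by (simp add: E.hom_sum E.hom_mult)
  finally show ?thesis by simp
qed

end


context code_setting begin

lemma code_root_vanish: assumes cC: "c \<in> negacyclic_code n M" and t: "t < n"
  and nR: "\<gamma>^(2*t+1) \<notin> (\<lambda>j. \<gamma>^(3^j)) ` {..<2*l}"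
  shows "ev c (\<gamma>^(2*t+1)) = 0"
proof -
  have "g dvd c" using cC unfolding code_eq by auto
  then obtain w where w: "c = g * w" by (rule dvdE)
  have "ev M (\<gamma>^(2*t+1)) * ev g (\<gamma>^(2*t+1)) = 0"
    using odd_root_X[of "2*t+1"] unfolding X_eq ev_mult by simp
  moreover have "ev M (\<gamma>^(2*t+1)) \<noteq> 0"
  proof
    assume "ev M (\<gamma>^(2*t+1)) = 0"
    then obtain j where "j < 2*l" "\<gamma>^(2*t+1) = \<gamma>^(3^j)" using minpoly_roots[OF minM] by blast
    then show False using nR by auto
  qed
  ultimately show ?thesis unfolding w ev_mult by simp
qed

lemma trace_formula: assumes dv: "degree v < n" and cC: "c \<in> negacyclic_code n M"
  shows "gf3_emb (\<Sum>i<n. coeff v i * coeff c i) = (\<Sum>j<2*l. (ev v iota * ev c \<gamma>)^(3^j))"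
proof -
  have dc: "degree c < n" using cC unfolding code_eq by auto
  define F where "F z = ev v (inverse z) * ev c z" for z
  let ?Om = "(\<lambda>t. \<gamma>^(2*t+1)) ` {..<n}"
  let ?R = "(\<lambda>j. \<gamma>^(3^j)) ` {..<2*l}"
  have "gf3_emb (\<Sum>i<n. coeff v i * coeff c i) = (\<Sum>t<n. ev v (iota^(2*t+1)) * ev c (\<gamma>^(2*t+1)))"
    by (rule dft[OF dv dc])
  also have "\<dots> = (\<Sum>t<n. F (\<gamma>^(2*t+1)))" unfolding F_def iota_inv by (simp add: power_inverse)
  also have "\<dots> = (\<Sum>z\<in>?Om. F z)" by (rule sum.reindex[OF Omega_inj, symmetric, unfolded comp_def])
  also have "\<dots> = (\<Sum>z\<in>?R. F z)"
  proof (rule sum.mono_neutral_right)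
    show "finite ?Om" by simp
    show "?R \<subseteq> ?Om" by (rule R_sub_Omega)
    show "\<forall>z\<in>?Om - ?R. F z = 0"
    proof
      fix z assume "z \<in> ?Om - ?R"
      then obtain t where t: "t < n" "z = \<gamma>^(2*t+1)" "\<gamma>^(2*t+1) \<notin> ?R" by auto
      then show "F z = 0" unfolding F_def using code_root_vanish[OF cC t(1) t(3)] by simp
    qed
  qed
  also have "\<dots> = (\<Sum>j<2*l. F (\<gamma>^(3^j)))" by (rule sum.reindex[OF pow3_inj, unfolded comp_def])
  also have "\<dots> = (\<Sum>j<2*l. (ev v iota * ev c \<gamma>)^(3^j))"
  proof (rule sum.cong[OF refl])
    fix j
    have "inverse (\<gamma>^(3^j)) = iota^(3^j)" by (simp add: iota_inv)
    then show "F (\<gamma>^(3^j)) = (ev v iota * ev c \<gamma>)^(3^j)"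
      unfolding F_def by (simp add: ev_frob power_mult_distrib)
  qed
  finally show ?thesis .
qed

lemma dual_sup: assumes dv: "degree v < n" and e0: "ev v iota = 0"
  shows "v \<in> dual_code n (negacyclic_code n M)"
  unfolding dual_code_def
proof (intro CollectI conjI ballI)
  show "degree v < n" by fact
next
  fix c assume cC: "c \<in> negacyclic_code n M"
  have "gf3_emb (\<Sum>i<n. coeff v i * coeff c i) = (\<Sum>j<2*l. (ev v iota * ev c \<gamma>)^(3^j))"
    by (rule trace_formula[OF dv cC])
  also have "\<dots> = 0" using e0 by (simp add: power_0_left)
  finally have "(gf3_emb (\<Sum>i<n. coeff v i * coeff c i) :: 'a) = 0" .
  then show "(\<Sum>i<n. coeff v i * coeff c i) = 0" by simp
qed

lemma dual_sub: assumes vD: "v \<in> dual_code n (negacyclic_code n M)"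
  shows "degree v < n \<and> ev v iota = 0"
proof -
  have dv: "degree v < n" and orth: "\<And>c. c \<in> negacyclic_code n M \<Longrightarrow> (\<Sum>i<n. coeff v i * coeff c i) = 0"
    using vD unfolding dual_code_def by auto
  have "ev v iota = 0"
  proof (rule ccontr)
    assume w0: "ev v iota \<noteq> 0"
    define Tp where "Tp = (\<Sum>j<2*l. monom (1::'a) (3^j))"
    have polyT: "poly Tp y = (\<Sum>j<2*l. y^(3^j))" for y
      unfolding Tp_def by (simp add: poly_sum poly_monom)
    have cT: "coeff Tp 1 = 1"
    proof -
      have "coeff Tp 1 = (\<Sum>j<2*l. if j = 0 then 1 else 0)"
        unfolding Tp_def coeff_sum by (intro sum.cong) (auto simp: coeff_monom)
      also have "\<dots> = 1" using l2 by (simp add: sum.delta)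
      finally show ?thesis .
    qed
    then have T0: "Tp \<noteq> 0" by auto
    have dT: "degree Tp \<le> 3^(2*l-1)"
      unfolding Tp_def
    proof (rule degree_sum_le)
      fix j assume "j \<in> {..<2*l}"
      then have "(3::nat)^j \<le> 3^(2*l-1)" by (intro power_increasing) auto
      then show "degree (monom (1::'a) (3^j)) \<le> 3^(2*l-1)" by (simp add: degree_monom_eq)
    qed simp
    let ?B = "{b :: gf3 poly. degree b < 2*l}"
    define phi where "phi b = ev v iota * (ev g \<gamma> * ev b \<gamma>)" for b
    have roots: "phi ` ?B \<subseteq> {y. poly Tp y = 0}"
    proof
      fix y assume "y \<in> phi ` ?B"
      then obtain b where b: "degree b < 2*l" "y = phi b" by auto
      have cC: "g * b \<in> negacyclic_code n M"
        unfolding code_eq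
      proof (intro CollectI conjI)
        show "degree (g * b) < n"
        proof (cases "b = 0")
          case True then show ?thesis using n_ge by simp
        next
          case False
          then have "degree (g * b) = degree g + degree b" using gp_nz by (simp add: degree_mult_eq)
          then show ?thesis using g_deg b(1) two_l_lt_n by simp
        qed
      qed simp
      have "gf3_emb (\<Sum>i<n. coeff v i * coeff (g*b) i) = (\<Sum>j<2*l. (ev v iota * ev (g*b) \<gamma>)^(3^j))"
        by (rule trace_formula[OF dv cC])
      then have "(\<Sum>j<2*l. (ev v iota * ev (g*b) \<gamma>)^(3^j)) = 0" using orth[OF cC] by simp
      then show "y \<in> {y. poly Tp y = 0}" unfolding polyT b(2) phi_def by (simp add: ev_mult)
    qed
    have inj: "inj_on phi ?B"
    proof (rule inj_onI)
      fix b b' assume b: "b \<in> ?B" and b': "b' \<in> ?B" and eq: "phi b = phi b'"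
      then have "ev b \<gamma> = ev b' \<gamma>" unfolding phi_def using w0 ev_g_nz by simp
      then have e: "ev (b - b') \<gamma> = 0" by (simp add: ev_diff)
      show "b = b'"
      proof (rule ccontr)
        assume "b \<noteq> b'"
        then have "2*l \<le> degree (b - b')" using deg_lower[OF _ e] by simp
        moreover have "degree (b - b') < 2*l" using b b' by (auto intro: degree_diff_less)
        ultimately show False by simp
      qed
    qed
    have "(3::nat)^(2*l) = card ?B" using card_polys[of "2*l"] l2 by simp
    also have "\<dots> = card (phi ` ?B)" using card_image[OF inj] by simp
    also have "\<dots> \<le> card {y. poly Tp y = 0}" by (rule card_mono[OF poly_roots_finite[OF T0] roots])
    also have "\<dots> \<le> degree Tp" by (rule card_poly_roots_bound[OF T0])
    also have "\<dots> \<le> 3^(2*l-1)" by (rule dT)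
    finally have "(3::nat)^(2*l) \<le> 3^(2*l-1)" .
    moreover have "(3::nat)^(2*l-1) < 3^(2*l)" using l2 by (intro power_strict_increasing) auto
    ultimately show False using l2 by simp
  qed
  then show ?thesis using dv by simp
qed

lemma dual_char: "dual_code n (negacyclic_code n M) = {v. degree v < n \<and> ev v iota = 0}"
  using dual_sub dual_sup by blast

end


context setting begin

definition W :: "gf3 poly set" where "W = {v. degree v < n \<and> ev v \<gamma> = 0}"

lemma two_m_le': "2*m + 1 \<le> (3::nat)^m"
proof (induction m)
  case 0 then show ?case by simp
next
  case (Suc m)
  have "(1::nat) \<le> 3^m" by simp
  then show ?case using Suc by simp
qed

lemma two_l_lt_n': "2*l < n"
  using two_m_le'[of l] n_def by simp

lemma W_eq: "W = {v. degree v < n \<and> P0 dvd v}"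
proof -
  have "ev v \<gamma> = 0 \<longleftrightarrow> P0 dvd v" for v
  proof
    assume "ev v \<gamma> = 0" then show "P0 dvd v" by (rule minpoly_dvd[OF P0_min])
  next
    assume "P0 dvd v"
    then obtain k where "v = P0 * k" by (rule dvdE)
    then show "ev v \<gamma> = 0" using ev_P0_g by (simp add: ev_mult)
  qed
  then show ?thesis unfolding W_def by auto
qed

lemma W_dim: "code_dim W = n - 2*l"
  unfolding W_eq code_dim_PV using dim_multiples[OF P0_nz, of n] P0_deg two_l_lt_n' by simp

lemma W_diff: "c \<in> W \<Longrightarrow> c' \<in> W \<Longrightarrow> c - c' \<in> W"
  unfolding W_def by (auto intro: degree_diff_less simp: ev_diff)

lemma W_zero: "0 \<in> W"
  unfolding W_def using n_ge by (simp add: ev_zero)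

lemma pm_sum2: assumes "a = 1 \<or> a = -1" "b = 1 \<or> b = -1" "a * x + b * y = (0::'b)"
  shows "x = y \<or> x = - y"
proof -
  have aa: "a*a = 1" using assms(1) by auto
  have ax: "a*x = -(b*y)" using assms(3) by (simp add: eq_neg_iff_add_eq_0)
  have "x = a*(a*x)" using aa by (simp add: mult.assoc[symmetric])
  also have "\<dots> = -(a*b)*y" using ax by simp
  finally have xe: "x = -(a*b)*y" .
  have "a*b = 1 \<or> a*b = -1" using assms(1,2) by auto
  then show ?thesis using xe by auto
qed

lemma emb_pm: "c \<noteq> 0 \<Longrightarrow> (gf3_emb c :: 'b) = 1 \<or> (gf3_emb c :: 'b) = -1"
  using emb_cases[of c] by auto

lemma frob_q: "(a + b)^(3^l) = a^(3^l) + (b::'b)^(3^l)" by (rule frob)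

lemma even_q_facts: assumes "even l"
  shows "\<exists>h. (3::nat)^l = 9^h" and "\<exists>m. n = 2*m \<and> odd m"
proof -
  obtain h where h: "l = 2*h" using assms by auto
  have q: "(3::nat)^l = 9^h" unfolding h by (simp add: power_mult)
  then show "\<exists>h. (3::nat)^l = 9^h" by auto
  have "(9::nat)^h mod 4 = 1"
  proof -
    have "(9::nat)^h mod 4 = (9 mod 4)^h mod 4" by (rule power_mod[symmetric])
    then show ?thesis by simp
  qed
  then have "n mod 4 = 2" using q n_def by (simp add: mod_Suc)
  then have "n = 2 * (n div 2) \<and> odd (n div 2)" by presburger
  then show "\<exists>m. n = 2*m \<and> odd m" by blast
qed

lemma x9_pow: assumes "x^9 = (x::'b)" shows "x^(9^h) = x"
proof (induction h)
  case 0 then show ?case by simp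
next
  case (Suc h)
  have "x^(9^Suc h) = (x^(9^h))^9" by (simp add: power_mult[symmetric] mult.commute)
  then show ?case using Suc assms by simp
qed

lemma no_triple: assumes ev: "even l" and x1: "x^(2*n) = (1::'b)" and x2: "(1+x)^(2*n) = 1"
  shows "x = 1"
proof -
  obtain h where qh: "(3::nat)^l = 9^h" using even_q_facts(1)[OF ev] by auto
  obtain m where nm: "n = 2*m" and om: "odd m" using even_q_facts(2)[OF ev] by auto
  define q where "q = (3::nat)^l"
  have nq: "n = q + 1" unfolding q_def n_def ..
  define s where "s = x^n"
  define t where "t = (1+x)^n"
  have s2: "s^2 = 1" unfolding s_def using x1 by (simp add: power_mult[symmetric] mult.commute)
  have t2: "t^2 = 1" unfolding t_def using x2 by (simp add: power_mult[symmetric] mult.commute)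
  have sc: "s = 1 \<or> s = -1" using s2 by (simp add: power2_eq_1_iff)
  have tc: "t = 1 \<or> t = -1" using t2 by (simp add: power2_eq_1_iff)
  have h1: "x * x^q = s" unfolding s_def nq by (simp add: mult.commute)
  have h2: "(1+x)^q = 1 + x^q" unfolding q_def using frob[of 1 x l] by simp
  have h3: "t = (1 + x^q) * (1 + x)" unfolding t_def nq using h2 by (simp add: mult.commute)
  have key: "t * x = (x + s) * (1 + x)" using h1 h3 by (simp add: algebra_simps)
  have th: "3 * (y::'b) = 0" for y using three by simp
  show ?thesis
  proof (cases "s = 1")
    case s1: True
    show ?thesis
    proof (cases "t = 1")
      case True
      then have e: "x = (x + 1) * (1 + x)" using key s1 by simp
      have "(x - 1)^2 = ((x + 1) * (1 + x) - x) - 3 * x" by (simp add: power2_eq_square algebra_simps)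
      also have "\<dots> = 0" using e th by simp
      finally show ?thesis by simp
    next
      case False
      then have tm: "t = -1" using tc by simp
      then have e: "- x = (x + 1) * (1 + x)" using key s1 by simp
      have "x^2 + 1 = ((x + 1) * (1 + x) + x) - 3 * x" by (simp add: power2_eq_square algebra_simps)
      also have "\<dots> = 0" unfolding e[symmetric] using th by simp
      finally have xx: "x^2 = -1" by (simp add: eq_neg_iff_add_eq_0)
      have "s = (x^2)^m" unfolding s_def nm by (simp add: power_mult)
      also have "\<dots> = -1" using xx om by simp
      finally show ?thesis using s1 one_ne_neg by simp
    qed
  next
    case False
    then have sm: "s = -1" using sc by simp
    show ?thesis
    proof (cases "t = 1")
      case True
      then have e: "x = (x - 1) * (1 + x)" using key sm by simp
      have x2e: "x^2 = x + 1"
      proof -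
        have "x^2 - x - 1 = (x - 1) * (1 + x) - x" by (simp add: power2_eq_square algebra_simps)
        then show ?thesis using e by (simp add: algebra_simps)
      qed
      have x3: "x^3 = 2*x + 1"
      proof -
        have "x^3 = x * x^2" by (simp add: power3_eq_cube power2_eq_square)
        also have "\<dots> = x * (x + 1)" using x2e by simp
        also have "\<dots> = x^2 + x" by (simp add: power2_eq_square algebra_simps)
        also have "\<dots> = 2*x + 1" using x2e by simp
        finally show ?thesis .
      qed
      have "x^9 = (x^3)^3" by (simp add: power_mult[symmetric])
      also have "\<dots> = (2*x)^3 + 1^3" unfolding x3 by (rule frob3)
      also have "\<dots> = 8 * x^3 + 1" by (simp add: power_mult_distrib)
      also have "\<dots> = x + 3 * (5*x + 3)" unfolding x3 by (simp add: algebra_simps)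
      also have "\<dots> = x" using th[of "5*x+3"] by simp
      finally have "x^9 = x" .
      then have "x^q = x" unfolding q_def qh by (rule x9_pow)
      then have "x^2 = -1" using h1 sm by (simp add: power2_eq_square)
      then have "x + 1 = -1" using x2e by simp
      then have "x = 1 + (-3)" by (simp add: algebra_simps eq_neg_iff_add_eq_0)
      then show ?thesis using three by simp
    next
      case False
      then have tm: "t = -1" using tc by simp
      then have e: "- x = (x - 1) * (1 + x)" using key sm by simp
      have x2e: "x^2 = 1 - x"
      proof -
        have "x^2 + x - 1 = (x - 1) * (1 + x) + x" by (simp add: power2_eq_square algebra_simps)
        then show ?thesis using e by (simp add: algebra_simps)
      qed
      have x3: "x^3 = 2*x - 1"
      proof -
        have "x^3 = x * x^2" by (simp add: power3_eq_cube power2_eq_square)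
        also have "\<dots> = x * (1 - x)" using x2e by simp
        also have "\<dots> = x - x^2" by (simp add: power2_eq_square algebra_simps)
        also have "\<dots> = 2*x - 1" using x2e by simp
        finally show ?thesis .
      qed
      have "x^9 = (x^3)^3" by (simp add: power_mult[symmetric])
      also have "\<dots> = (2*x)^3 + (-1)^3" unfolding x3 using frob3[of "2*x" "-1"] by simp
      also have "\<dots> = 8 * x^3 - 1" by (simp add: power_mult_distrib)
      also have "\<dots> = x + 3 * (5*x - 3)" unfolding x3 by (simp add: algebra_simps)
      also have "\<dots> = x" using th[of "5*x-3"] by simp
      finally have "x^9 = x" .
      then have "x^q = x" unfolding q_def qh by (rule x9_pow)
      then have xx: "x^2 = -1" using h1 sm by (simp add: power2_eq_square)
      then have "x = 2" using x2e by (simp add: algebra_simps)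
      then have "x^2 = 1 + 3" by (simp add: power2_eq_square)
      then have "x^2 = 1" using three by simp
      then show ?thesis using xx one_ne_neg by simp
    qed
  qed
qed

end


lemma gf3_m2: "(-2::gf3) = 1" using gf3_two by simp
lemma gf3_10: "(1::gf3) \<noteq> 0" by simp
lemma gf3_m10: "(-1::gf3) \<noteq> 0" by simp
lemma gf3_21: "(2::gf3) \<noteq> 1"
proof
  assume h: "(2::gf3) = 1"
  have "(1::gf3) = 2 - 1" by simp
  also have "\<dots> = 1 - 1" using h by simp
  also have "\<dots> = 0" by simp
  finally show False by simp
qed

definition fpair :: "nat \<Rightarrow> nat \<Rightarrow> gf3 poly" where
  "fpair i j = monom 1 i + monom (if i \<le> j then 1 else -1) j"

lemma coeff_fpair: "coeff (fpair i j) p = (if i = p then 1 else 0) + (if j = p then (if i \<le> j then 1 else -1) else 0)"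
  unfolding fpair_def by (simp add: coeff_monom)

lemma gf3_2nz: "(2::gf3) \<noteq> 0" using gf3_two by (metis neg_0_equal_iff_equal zero_neq_one)

lemma supp_fpair: "{p. coeff (fpair a b) p \<noteq> 0} = {a, b}"
proof (cases "a = b")
  case True
  have "coeff (fpair a b) p = (if a = p then 2 else 0)" for p
    unfolding coeff_fpair using True by simp
  then show ?thesis using True gf3_2nz by auto
next
  case False
  have "coeff (fpair a b) p = (if a = p then 1 else if b = p then (if a \<le> b then 1 else -1) else 0)" for p
    unfolding coeff_fpair using False by auto
  then show ?thesis by auto
qed

lemma fpair_inj: assumes "fpair i j = fpair i' j'" shows "i = i' \<and> j = j'"
proof -
  have "{i, j} = {i', j'}" using supp_fpair[of i j] supp_fpair[of i' j'] assms by simp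
  then have "(i = i' \<and> j = j') \<or> (i = j' \<and> j = i')" by (auto simp: doubleton_eq_iff)
  then show ?thesis
  proof
    assume "i = i' \<and> j = j'" then show ?thesis .
  next
    assume sw: "i = j' \<and> j = i'"
    show ?thesis
    proof (cases "i = j")
      case True then show ?thesis using sw by simp
    next
      case False
      have "coeff (fpair i j) i = coeff (fpair j i) i" using assms sw by simp
      then have "(1::gf3) = (if j \<le> i then 1 else -1)" unfolding coeff_fpair using False by simp
      then have ji: "j \<le> i" using gf3_one_neq_neg by (auto split: if_splits)
      have "coeff (fpair i j) j = coeff (fpair j i) j" using assms sw by simp
      then have "(if i \<le> j then 1 else -1) = (1::gf3)" unfolding coeff_fpair using False by simp
      then have ij: "i \<le> j" using gf3_one_neq_neg by (auto split: if_splits)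
      then show ?thesis using ji False by simp
    qed
  qed
qed

context setting begin

lemma W_sum: assumes "v \<in> W"
  shows "(\<Sum>i\<in>{i. i < n \<and> coeff v i \<noteq> 0}. gf3_emb (coeff v i) * \<gamma>^i) = 0"
  using assms ev_sum_supp[of v \<gamma>] unfolding W_def by simp

lemma pow2n_pm: "(e::'b) = 1 \<or> e = -1 \<Longrightarrow> e^(2*n) = 1"
  by (auto simp: power_mult)

lemma gpow_2n: "(\<gamma>^j)^(2*n) = 1"
proof -
  have "(\<gamma>^j)^(2*n) = (\<gamma>^(2*n))^j" by (metis power_mult mult.commute)
  then show ?thesis using g_2n by simp
qed

lemma W_wt: assumes vW: "v \<in> W" and v0: "v \<noteq> 0"
  shows "3 \<le> hweight n v \<and> (even l \<longrightarrow> 4 \<le> hweight n v)"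
proof -
  define S where "S = {i. i < n \<and> coeff v i \<noteq> 0}"
  define e where "e i = (gf3_emb (coeff v i) :: 'b)" for i
  have dv: "degree v < n" using vW unfolding W_def by simp
  have fin: "finite S" unfolding S_def by simp
  have ne: "degree v \<in> S" using supp_ne[OF v0 dv] unfolding S_def .
  have cS: "card S = hweight n v" unfolding S_def hweight_def ..
  have sum0: "(\<Sum>i\<in>S. e i * \<gamma>^i) = 0" using W_sum[OF vW] unfolding S_def e_def .
  have epm: "e i = 1 \<or> e i = -1" if "i \<in> S" for i
  proof -
    have "coeff v i \<noteq> 0" using that unfolding S_def by simp
    then show ?thesis unfolding e_def by (rule emb_pm)
  qed
  have Sn: "i \<in> S \<Longrightarrow> i < n" for i unfolding S_def by simp
  have c1: "card S \<noteq> 1"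
  proof
    assume "card S = 1"
    then have "\<exists>x. S = {x}" by (simp add: card_1_singleton_iff)
    then obtain i where Si: "S = {i}" by blast
    then have "e i * \<gamma>^i = 0" using sum0 by simp
    moreover have "e i \<noteq> 0" using epm[of i] Si one_ne_neg by auto
    moreover have "\<gamma>^i \<noteq> 0" using g_nz by simp
    ultimately show False by simp
  qed
  have c2: "card S \<noteq> 2"
  proof
    assume "card S = 2"
    then obtain i j where Sij: "S = {i, j}" "i \<noteq> j" using card_2_iff[of S] by blast
    then have s2: "e i * \<gamma>^i + e j * \<gamma>^j = 0" using sum0 by simp
    have ei: "e i = 1 \<or> e i = -1" using epm Sij by simp
    have ej: "e j = 1 \<or> e j = -1" using epm Sij by simp
    have "\<gamma>^i = \<gamma>^j \<or> \<gamma>^i = -(\<gamma>^j)" by (rule pm_sum2[OF ei ej s2])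
    moreover have "i < n" "j < n" using Sn Sij by auto
    ultimately have "i = j" using g_pm_eq by blast
    then show False using Sij by simp
  qed
  have c3: "card S \<noteq> 3" if ev: "even l"
  proof
    assume "card S = 3"
    then obtain i j k where Sijk: "S = {i, j, k}" "i \<noteq> j" "j \<noteq> k" "i \<noteq> k" using card_3_iff[of S] by blast
    have s3: "e i * \<gamma>^i + e j * \<gamma>^j + e k * \<gamma>^k = 0" using sum0 Sijk by (simp add: add.assoc)
    have ei: "e i = 1 \<or> e i = -1" using epm Sijk by simp
    have ej: "e j = 1 \<or> e j = -1" using epm Sijk by simp
    have ek: "e k = 1 \<or> e k = -1" using epm Sijk by simp
    have ei0: "e i * \<gamma>^i \<noteq> 0" using ei g_nz one_ne_neg by auto
    define u where "u = inverse (e i * \<gamma>^i)"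
    have ui: "(e i * \<gamma>^i) * u = 1" unfolding u_def by (rule right_inverse[OF ei0])
    define x where "x = e j * \<gamma>^j * u"
    define y where "y = e k * \<gamma>^k * u"
    have "(e i * \<gamma>^i + e j * \<gamma>^j + e k * \<gamma>^k) * u = (e i * \<gamma>^i) * u + x + y"
      unfolding x_def y_def by (simp only: distrib_right)
    then have xy: "1 + x + y = 0" using s3 ui by simp
    have pi: "(e i * \<gamma>^i)^(2*n) = 1" unfolding power_mult_distrib using pow2n_pm[OF ei] gpow_2n[of i] by simp
    have "u^(2*n) = inverse ((e i * \<gamma>^i)^(2*n))" unfolding u_def by (rule power_inverse)
    then have u2n: "u^(2*n) = 1" using pi by simp
    have x2n: "x^(2*n) = 1"
      unfolding x_def power_mult_distrib using pow2n_pm[OF ej] gpow_2n[of j] u2n by simp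
    have y2n: "y^(2*n) = 1"
      unfolding y_def power_mult_distrib using pow2n_pm[OF ek] gpow_2n[of k] u2n by simp
    have "1 + x = - y" using xy by (simp add: eq_neg_iff_add_eq_0)
    moreover have "(- y)^(2*n) = y^(2*n)" by (simp add: power_mult)
    ultimately have "(1 + x)^(2*n) = 1" using y2n by simp
    then have x1: "x = 1" using no_triple[OF ev x2n] by simp
    have "e j * \<gamma>^j = (e j * \<gamma>^j * u) * (e i * \<gamma>^i)"
      using ui by (simp add: mult.assoc mult.commute[of u])
    also have "\<dots> = e i * \<gamma>^i" using x1 unfolding x_def by simp
    finally have "e j * \<gamma>^j + (- e i) * \<gamma>^i = 0" by simp
    moreover have "- e i = 1 \<or> - e i = -1" using ei by auto
    ultimately have "\<gamma>^j = \<gamma>^i \<or> \<gamma>^j = -(\<gamma>^i)" using pm_sum2[OF ej] by blast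
    moreover have "i < n" "j < n" using Sn Sijk by auto
    ultimately have "j = i" using g_pm_eq by blast
    then show False using Sijk by simp
  qed
  have "card S \<noteq> 0" using fin ne by auto
  then show ?thesis using c1 c2 c3 cS by auto
qed

end


context setting begin

lemma fpair_deg: "i < n \<Longrightarrow> j < n \<Longrightarrow> degree (fpair i j) < n"
  unfolding fpair_def by (intro degree_add_less) (auto intro: le_less_trans[OF degree_monom_le])

lemma W_wt4_ex: "\<exists>v\<in>W. v \<noteq> 0 \<and> hweight n v \<le> 4"
proof -
  let ?A = "{..<n} \<times> {..<n}"
  let ?F = "\<lambda>(i,j). fpair i j"
  let ?H = "\<lambda>u. u mod P0"
  let ?B = "{r :: gf3 poly. degree r < 2*l}"
  have injF: "inj_on ?F ?A"
    by (rule inj_onI) (auto dest: fpair_inj)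
  have cFA: "card (?F ` ?A) = n * n" using card_image[OF injF] by simp
  have cB: "card ?B = 3^(2*l)" using card_polys[of "2*l"] l2 by simp
  have finB: "finite ?B" using cB by (intro card_ge_0_finite) simp
  have HB: "?H ` (?F ` ?A) \<subseteq> ?B"
  proof
    fix r assume "r \<in> ?H ` (?F ` ?A)"
    then obtain u where r: "r = u mod P0" by auto
    show "r \<in> ?B"
    proof (cases "r = 0")
      case True then show ?thesis using l2 by simp
    next
      case False
      then have "degree r < degree P0" unfolding r using degree_mod_less'[OF P0_nz] by simp
      then show ?thesis using P0_deg by simp
    qed
  qed
  have lt: "(3::nat)^(2*l) < n * n"
  proof -
    have "(3::nat)^(2*l) = 3^l * 3^l" by (simp add: power_add[symmetric] mult_2)
    also have "\<dots> < n * n" unfolding n_def by (intro mult_strict_mono) auto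
    finally show ?thesis .
  qed
  have "\<not> inj_on ?H (?F ` ?A)"
  proof
    assume "inj_on ?H (?F ` ?A)"
    then have "card (?H ` (?F ` ?A)) = n * n" using card_image cFA by metis
    moreover have "card (?H ` (?F ` ?A)) \<le> 3^(2*l)" using card_mono[OF finB HB] cB by simp
    ultimately show False using lt by simp
  qed
  then obtain u u' where uu: "u \<in> ?F ` ?A" "u' \<in> ?F ` ?A" "u \<noteq> u'" "u mod P0 = u' mod P0"
    unfolding inj_on_def by blast
  from uu(1) obtain i j where ij: "i < n" "j < n" "u = fpair i j" by auto
  from uu(2) obtain i' j' where ij': "i' < n" "j' < n" "u' = fpair i' j'" by auto
  define d where "d = u - u'"
  have dP: "P0 dvd d" unfolding d_def using uu(4) by (simp add: mod_eq_dvd_iff)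
  have dd: "degree d < n" unfolding d_def ij(3) ij'(3) using fpair_deg ij ij' by (intro degree_diff_less) auto
  have dW: "d \<in> W" unfolding W_eq using dP dd by simp
  have d0: "d \<noteq> 0" unfolding d_def using uu(3) by simp
  have sub: "{p. p < n \<and> coeff d p \<noteq> 0} \<subseteq> set [i, j, i', j']"
  proof
    fix p assume p: "p \<in> {p. p < n \<and> coeff d p \<noteq> 0}"
    then have "coeff u p \<noteq> 0 \<or> coeff u' p \<noteq> 0" unfolding d_def by auto
    then show "p \<in> set [i, j, i', j']"
      using supp_fpair[of i j] supp_fpair[of i' j'] ij(3) ij'(3) by auto
  qed
  have "hweight n d \<le> card (set [i, j, i', j'])" unfolding hweight_def by (rule card_mono[OF _ sub]) simp
  also have "\<dots> \<le> 4" using card_length[of "[i, j, i', j']"] by simp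
  finally show ?thesis using dW d0 by blast
qed

lemma W_wt3_ex: assumes od: "odd l" shows "\<exists>v\<in>W. v \<noteq> 0 \<and> hweight n v = 3"
proof -
  define m2 where "m2 = n div 2"
  have nm2: "n = 2 * m2" unfolding m2_def using n_even by simp
  have m2n: "0 < m2" "m2 < n" using nm2 n_ge by auto
  define i0 where "i0 = \<gamma>^m2"
  have i02: "i0^2 = -1" unfolding i0_def using g_n nm2 by (simp add: power_mult[symmetric] mult.commute)
  have i0_0: "i0 \<noteq> 0" using i02 by auto
  have i0_1: "i0 \<noteq> 1" using i02 one_ne_neg by auto
  have n4: "n mod 4 = 0"
  proof -
    obtain h where h: "l = 2*h + 1" using od by (metis oddE)
    have "(3::nat)^l = 3 * 9^h" unfolding h by (simp add: power_mult)
    moreover have "(9::nat)^h mod 4 = 1"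
    proof -
      have "(9::nat)^h mod 4 = (9 mod 4)^h mod 4" by (rule power_mod[symmetric])
      then show ?thesis by simp
    qed
    moreover have "(3 * ((9::nat)^h mod 4)) mod 4 = 3 * 9^h mod 4" by (rule mod_mult_right_eq)
    ultimately have "(3::nat)^l mod 4 = 3" by simp
    then show ?thesis unfolding n_def by presburger
  qed
  then obtain m4 where m4: "n = 4 * m4" by (metis mod_eq_0_iff_dvd dvdE)
  have th: "3 * (y::'b) = 0" for y using three by simp
  have s2: "(1 + i0)^2 = 2 * i0"
  proof -
    have "(1 + i0)^2 = 2 * i0 + (1 + i0^2)" by (simp add: power2_eq_square algebra_simps)
    then show ?thesis using i02 by simp
  qed
  have s8: "(1 + i0)^8 = 1"
  proof -
    have "(1 + i0)^8 = ((1 + i0)^2)^4" by (simp add: power_mult[symmetric])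
    also have "\<dots> = 16 * (i0^2)^2" unfolding s2 by (simp add: power_mult_distrib power_mult[symmetric])
    also have "\<dots> = 1 + 3 * 5" using i02 by simp
    also have "\<dots> = 1" using th[of 5] by simp
    finally show ?thesis .
  qed
  have "(1 + i0)^(2*n) = ((1 + i0)^8)^m4" unfolding m4 by (simp add: power_mult[symmetric])
  then have "(1 + i0)^(2*n) = 1" using s8 by simp
  then obtain k where k: "k < n" "1 + i0 = \<gamma>^k \<or> 1 + i0 = -(\<gamma>^k)" using root_2n_pm by blast
  define c :: gf3 where "c = (if 1 + i0 = \<gamma>^k then -1 else 1)"
  have c0: "c \<noteq> 0" unfolding c_def by simp
  have cg: "gf3_emb c * \<gamma>^k = -(1 + i0)"
  proof (cases "1 + i0 = \<gamma>^k")
    case True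
    have "gf3_emb c = (-1::'b)" unfolding c_def using True by (simp add: emb_one E.hom_uminus)
    then show ?thesis using True by simp
  next
    case False
    then have e: "1 + i0 = -(\<gamma>^k)" using k(2) by simp
    have "gf3_emb c = (1::'b)" unfolding c_def using False by (simp add: emb_one)
    then show ?thesis using e by simp
  qed
  have k0: "k \<noteq> 0"
  proof
    assume "k = 0"
    then have "1 + i0 = 1 \<or> 1 + i0 = -1" using k(2) by simp
    then show False
    proof
      assume "1 + i0 = 1" then show False using i0_0 by simp
    next
      assume "1 + i0 = -1"
      then have "i0 = 1 + (-3)" by (simp add: algebra_simps eq_neg_iff_add_eq_0)
      then show False using three i0_1 by simp
    qed
  qed
  have km: "k \<noteq> m2"
  proof
    assume "k = m2"
    then have "1 + i0 = i0 \<or> 1 + i0 = -i0" using k(2) unfolding i0_def by simp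
    then show False
    proof
      assume "1 + i0 = i0" then show False by simp
    next
      assume "1 + i0 = -i0"
      then have "1 + 2 * i0 = 0" by (simp add: algebra_simps eq_neg_iff_add_eq_0)
      then have "1 - i0 + 3 * i0 = 0" by (simp add: algebra_simps)
      then have "1 - i0 = 0" using th[of i0] by simp
      then show False using i0_1 by simp
    qed
  qed
  define v where "v = monom 1 0 + monom 1 m2 + monom c k"
  have cv: "coeff v p = (if 0 = p then 1 else 0) + (if m2 = p then 1 else 0) + (if k = p then c else 0)" for p
    unfolding v_def coeff_add coeff_monom ..
  have dv: "degree v < n" unfolding v_def using m2n k(1) n_ge
    by (intro degree_add_less) (auto intro: le_less_trans[OF degree_monom_le])
  have ev0: "ev v \<gamma> = 0"
    unfolding v_def ev_add ev_monom using cg unfolding i0_def[symmetric] by (simp add: emb_one)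
  have cv0: "coeff v 0 = 1" unfolding cv using m2n k0 by simp
  have cvm: "coeff v m2 = 1" unfolding cv using m2n km by simp
  have cvk: "coeff v k = c" unfolding cv using k0 km by simp
  have cvo: "coeff v p = 0" if "p \<noteq> 0" "p \<noteq> m2" "p \<noteq> k" for p
    unfolding cv using that by simp
  have supp: "{p. p < n \<and> coeff v p \<noteq> 0} = {0, m2, k}"
  proof
    show "{p. p < n \<and> coeff v p \<noteq> 0} \<subseteq> {0, m2, k}" using cvo by blast
    show "{0, m2, k} \<subseteq> {p. p < n \<and> coeff v p \<noteq> 0}" using cv0 cvm cvk c0 m2n k(1) n_ge by auto
  qed
  have "hweight n v = 3" unfolding hweight_def supp using m2n k0 km by simp
  moreover have "v \<in> W" unfolding W_def using dv ev0 by simp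
  moreover have "v \<noteq> 0"
  proof
    assume "v = 0"
    then have "coeff v 0 = 0" by simp
    then show False using cv0 by simp
  qed
  ultimately show ?thesis by blast
qed

end


theorem theorem26:
  fixes l n :: nat and \<beta> :: "'b::field" and M :: "gf3 poly"
  assumes "l \<ge> 2" and "n = 3 ^ l + 1"
    and "CHAR('b) = 3"
    and "primitive_root_unity (2 * n) \<beta>"
    and "is_min_poly_GF3 \<beta> M"
  shows "code_dim (negacyclic_code n M) = 2 * l
       \<and> real (min_dist n (negacyclic_code n M)) \<ge> (3 ^ l + 3) / 2
       \<and> code_dim (dual_code n (negacyclic_code n M)) = n - 2 * l
       \<and> min_dist n (dual_code n (negacyclic_code n M)) = (if odd l then 3 else 4)"
proof -
  interpret C: code_setting l n \<beta> M
    by unfold_locales (use assms in auto)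
  interpret D: setting l n C.iota
    by unfold_locales (use assms C.iota_prim in auto)
  let ?C = "negacyclic_code n M"
  have dual: "dual_code n ?C = D.W"
    unfolding C.dual_char D.W_def C.ev_def D.ev_def ..
  have p1: "code_dim ?C = 2 * l" by (rule C.code_dim_C)
  have md: "(3^l + 3) div 2 \<le> min_dist n ?C"
  proof (rule min_dist_ge)
    show "\<And>c c'. c \<in> ?C \<Longrightarrow> c' \<in> ?C \<Longrightarrow> c - c' \<in> ?C" by (rule C.code_diff)
    show "0 \<in> ?C" by (rule C.code_zero)
    show "C.g \<in> ?C" by (rule C.code_g)
    show "0 \<noteq> C.g" using C.gp_nz by simp
    fix v assume "v \<in> ?C" "v \<noteq> 0"
    then have "3^l + 3 \<le> 2 * hweight n v" by (rule C.bch)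
    then show "(3^l + 3) div 2 \<le> hweight n v" by simp
  qed
  have ev3: "even ((3::nat)^l + 3)" by simp
  then have "(3::nat)^l + 3 = 2 * ((3^l + 3) div 2)" by simp
  then have "(3::nat)^l + 3 \<le> 2 * min_dist n ?C" using md by linarith
  then have "real ((3::nat)^l + 3) \<le> real (2 * min_dist n ?C)" by (simp only: of_nat_le_iff)
  then have p2: "real (min_dist n ?C) \<ge> (3 ^ l + 3) / 2" by simp
  have p3: "code_dim (dual_code n ?C) = n - 2 * l" unfolding dual by (rule D.W_dim)
  have p4: "min_dist n (dual_code n ?C) = (if odd l then 3 else 4)"
  proof (cases "odd l")
    case True
    obtain v where v: "v \<in> D.W" "v \<noteq> 0" "hweight n v = 3" using D.W_wt3_ex[OF True] by blast
    have "min_dist n D.W = 3"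
    proof (rule min_dist_eq[OF D.W_diff D.W_zero v])
      fix w assume "w \<in> D.W" "w \<noteq> 0"
      then show "3 \<le> hweight n w" using D.W_wt by blast
    qed
    then show ?thesis unfolding dual using True by simp
  next
    case False
    obtain v where v: "v \<in> D.W" "v \<noteq> 0" "hweight n v \<le> 4" using D.W_wt4_ex by blast
    have v4: "hweight n v = 4" using v D.W_wt[OF v(1,2)] False by simp
    have "min_dist n D.W = 4"
    proof (rule min_dist_eq[OF D.W_diff D.W_zero v(1,2) v4])
      fix w assume "w \<in> D.W" "w \<noteq> 0"
      then show "4 \<le> hweight n w" using D.W_wt False by blast
    qed
    then show ?thesis unfolding dual using False by simp
  qed
  show ?thesis using p1 p2 p3 p4 by blast
qed


end
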